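(* Let $\mathcal{H}$ be a connected $Moor$-bialgebra. Then $\mathcal{H}$ is generated, as a $Moor$-algebra, by its primitive elements $\ker\Delta$. Moreover, $\ker\Delta=\mathcal{H}_1$.
   Context: $K$ is a field of characteristic zero; $\tau$ is the flip map. A $Moor$-bialgebra is a graded vector space $\mathcal{H}=\bigoplus_{p>0}\mathcal{H}_p$ with a bilinear operation $\prec$ satisfying $\mathcal{H}_p\prec\mathcal{H}_q\subseteq\mathcal{H}_{p+q}$, $(x\prec y)\prec z=(x\prec z)\prec y$ and $x\prec(y\prec z)=0$, together with a linear map $\Delta:\mathcal{H}\to\mathcal{H}\otimes\mathcal{H}$ (Sweedler notation $\Delta(x)=x_{(1)}\otimes x_{(2)}$) satisfying $(\mathrm{id}\otimes\Delta)\Delta=0$, $(\Delta\otimes\mathrm{id})\Delta=(\mathrm{id}\otimes\tau)(\Delta\otimes\mathrm{id})\Delta$, and $\Delta(x\prec y)=x\otimes e(y)+(x_{(1)}\prec y)\otimes x_{(2)}$ for all $x,y$, where $e:\mathcal{H}\to\mathcal{H}_1$ is the canonical projection. Primitive elements are the elements of $\ker\Delta$. Set $\Delta^{(1)}=\Delta$ and $\Delta^{(r)}=(\Delta\otimes\mathrm{id}^{\otimes(r-1)})\Delta^{(r-1)}$. The $Moor$-bialgebra is connected if $\ker\Delta\subseteq\mathcal{H}_1$ and $\mathcal{H}=\bigcup_{r\geq 1}\ker\Delta^{(r)}$. *)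

theory Defs
  imports Complex_Main "HOL-Library.Function_Algebras"
begin

text \<open>
  The Moor-bialgebra is the whole type 'h, a vector space over the field 'k
  (characteristic zero) with scalar multiplication scale.
  Tensor powers are realised as in the textbook construction: the free vector space on
  words (lists) of elements of 'h, i.e. finitely supported functions 'h list => 'k,
  modulo the subspace spanned by the multilinearity relations in every slot.  A word
  [x1,...,xn] stands for the pure tensor x1 (x) ... (x) xn.  Equality in the tensor
  product is the relation tensor_eq (difference lies in the span of the relations).
\<close>

definition fsmult :: "'k::field \<Rightarrow> ('h list \<Rightarrow> 'k) \<Rightarrow> ('h list \<Rightarrow> 'k)" where
  "fsmult c t = (\<lambda>w. c * t w)"

definition word :: "'h list \<Rightarrow> ('h list \<Rightarrow> 'k::zero_neq_one)" where
  "word w = (\<lambda>v. if v = w then 1 else 0)"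

definition tensor_rels :: "('k::field \<Rightarrow> 'h::ab_group_add \<Rightarrow> 'h) \<Rightarrow> ('h list \<Rightarrow> 'k) set" where
  "tensor_rels scale =
     {word (u @ (a + b) # v) - word (u @ a # v) - word (u @ b # v) | u a b v. True}
   \<union> {word (u @ scale c a # v) - fsmult c (word (u @ a # v)) | u c a v. True}"

definition tensor_eq :: "('k::field \<Rightarrow> 'h::ab_group_add \<Rightarrow> 'h) \<Rightarrow> ('h list \<Rightarrow> 'k) \<Rightarrow> ('h list \<Rightarrow> 'k) \<Rightarrow> bool" where
  "tensor_eq scale s t \<longleftrightarrow> s - t \<in> module.span fsmult (tensor_rels scale)"

definition lin_ext :: "('h list \<Rightarrow> ('h list \<Rightarrow> 'k::field)) \<Rightarrow> ('h list \<Rightarrow> 'k) \<Rightarrow> ('h list \<Rightarrow> 'k)" where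
  "lin_ext f t = (\<lambda>v. \<Sum>w\<in>{w. t w \<noteq> 0}. t w * f w v)"

text \<open>(Delta (x) id (x) ... (x) id) on a pure tensor\<close>
fun first_Delta :: "('h \<Rightarrow> ('h list \<Rightarrow> 'k::field)) \<Rightarrow> 'h list \<Rightarrow> ('h list \<Rightarrow> 'k)" where
  "first_Delta D [] = 0"
| "first_Delta D (a # r) = lin_ext (\<lambda>u. word (u @ r)) (D a)"

text \<open>(id (x) Delta) on a pure tensor of H (x) H\<close>
fun second_Delta :: "('h \<Rightarrow> ('h list \<Rightarrow> 'k::field)) \<Rightarrow> 'h list \<Rightarrow> ('h list \<Rightarrow> 'k)" where
  "second_Delta D [a, b] = lin_ext (\<lambda>u. word (a # u)) (D b)"
| "second_Delta D _ = 0"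

fun flip23 :: "'h list \<Rightarrow> ('h list \<Rightarrow> 'k::field)" where
  "flip23 [a, b, c] = word [a, c, b]"
| "flip23 _ = 0"

fun prec_first :: "('h \<Rightarrow> 'h \<Rightarrow> 'h) \<Rightarrow> 'h \<Rightarrow> 'h list \<Rightarrow> ('h list \<Rightarrow> 'k::field)" where
  "prec_first prec y [a, b] = word [prec a y, b]"
| "prec_first prec y _ = 0"

fun Delta_pow :: "('h \<Rightarrow> ('h list \<Rightarrow> 'k::field)) \<Rightarrow> nat \<Rightarrow> 'h \<Rightarrow> ('h list \<Rightarrow> 'k)" where
  "Delta_pow D 0 x = word [x]"
| "Delta_pow D (Suc 0) x = D x"
| "Delta_pow D (Suc (Suc r)) x = lin_ext (first_Delta D) (Delta_pow D (Suc r) x)"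

text \<open>H = direct sum of the subspaces G p, p > 0\<close>
definition graded :: "('k::field \<Rightarrow> 'h::ab_group_add \<Rightarrow> 'h) \<Rightarrow> (nat \<Rightarrow> 'h set) \<Rightarrow> bool" where
  "graded scale G \<longleftrightarrow> (\<forall>p>0. module.subspace scale (G p)) \<and>
     (\<forall>x. \<exists>!c::nat \<Rightarrow> 'h. c 0 = 0 \<and> (\<forall>p>0. c p \<in> G p) \<and> finite {p. c p \<noteq> 0}
                          \<and> x = (\<Sum>p\<in>{p. c p \<noteq> 0}. c p))"

definition grade_comp :: "(nat \<Rightarrow> 'h::ab_group_add set) \<Rightarrow> 'h \<Rightarrow> nat \<Rightarrow> 'h" where
  "grade_comp G x = (THE c. c 0 = 0 \<and> (\<forall>p>0. c p \<in> G p) \<and> finite {p. c p \<noteq> 0}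
                          \<and> x = (\<Sum>p\<in>{p. c p \<noteq> 0}. c p))"

definition proj1 :: "(nat \<Rightarrow> 'h::ab_group_add set) \<Rightarrow> 'h \<Rightarrow> 'h" where
  "proj1 G x = grade_comp G x 1"

definition moor_bialgebra ::
  "('k::field_char_0 \<Rightarrow> 'h::ab_group_add \<Rightarrow> 'h) \<Rightarrow> (nat \<Rightarrow> 'h set) \<Rightarrow> ('h \<Rightarrow> 'h \<Rightarrow> 'h)
     \<Rightarrow> ('h \<Rightarrow> ('h list \<Rightarrow> 'k)) \<Rightarrow> bool" where
  "moor_bialgebra scale G prec D \<longleftrightarrow>
     vector_space scale \<and> graded scale G \<and>
     \<comment> \<open>bilinear, graded, Moor identities\<close>
     (\<forall>x. Vector_Spaces.linear scale scale (prec x)) \<and>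
     (\<forall>y. Vector_Spaces.linear scale scale (\<lambda>x. prec x y)) \<and>
     (\<forall>p>0. \<forall>q>0. \<forall>x\<in>G p. \<forall>y\<in>G q. prec x y \<in> G (p + q)) \<and>
     (\<forall>x y z. prec (prec x y) z = prec (prec x z) y) \<and>
     (\<forall>x y z. prec x (prec y z) = 0) \<and>
     \<comment> \<open>Delta : H \<rightarrow> H (x) H linear\<close>
     (\<forall>x. D x \<in> module.span fsmult (word ` {w. length w = 2})) \<and>
     (\<forall>x y. tensor_eq scale (D (x + y)) (D x + D y)) \<and>
     (\<forall>c x. tensor_eq scale (D (scale c x)) (fsmult c (D x))) \<and>
     \<comment> \<open>(id (x) Delta) Delta = 0\<close>
     (\<forall>x. tensor_eq scale (lin_ext (second_Delta D) (D x)) 0) \<and>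
     \<comment> \<open>(Delta (x) id) Delta = (id (x) tau)(Delta (x) id) Delta\<close>
     (\<forall>x. tensor_eq scale (lin_ext (first_Delta D) (D x))
                          (lin_ext flip23 (lin_ext (first_Delta D) (D x)))) \<and>
     \<comment> \<open>Delta (x \<prec> y) = x (x) e(y) + (x_(1) \<prec> y) (x) x_(2)\<close>
     (\<forall>x y. tensor_eq scale (D (prec x y))
                          (word [x, proj1 G y] + lin_ext (prec_first prec y) (D x)))"

definition primitives :: "('k::field \<Rightarrow> 'h::ab_group_add \<Rightarrow> 'h) \<Rightarrow> ('h \<Rightarrow> ('h list \<Rightarrow> 'k)) \<Rightarrow> 'h set" where
  "primitives scale D = {x. tensor_eq scale (D x) 0}"

definition ker_Delta_pow :: "('k::field \<Rightarrow> 'h::ab_group_add \<Rightarrow> 'h) \<Rightarrow> ('h \<Rightarrow> ('h list \<Rightarrow> 'k)) \<Rightarrow> nat \<Rightarrow> 'h set" where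
  "ker_Delta_pow scale D r = {x. tensor_eq scale (Delta_pow D r x) 0}"

definition connected_moor ::
  "('k::field_char_0 \<Rightarrow> 'h::ab_group_add \<Rightarrow> 'h) \<Rightarrow> (nat \<Rightarrow> 'h set) \<Rightarrow> ('h \<Rightarrow> ('h list \<Rightarrow> 'k)) \<Rightarrow> bool" where
  "connected_moor scale G D \<longleftrightarrow>
     primitives scale D \<subseteq> G 1 \<and> UNIV = (\<Union>r\<in>{1..}. ker_Delta_pow scale D r)"

definition moor_generated :: "('k::field \<Rightarrow> 'h::ab_group_add \<Rightarrow> 'h) \<Rightarrow> ('h \<Rightarrow> 'h \<Rightarrow> 'h) \<Rightarrow> 'h set \<Rightarrow> 'h set" where
  "moor_generated scale prec P =
     \<Inter>{S. P \<subseteq> S \<and> module.subspace scale S \<and> (\<forall>x\<in>S. \<forall>y\<in>S. prec x y \<in> S)}"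

end

theory Submission
  imports Defs
begin


lemma sum_fun_apply: "(\<Sum>i\<in>S. f i) x = (\<Sum>i\<in>S. f i x)"
  by (induction S rule: infinite_finite_induct) auto

lemma fsmult_apply[simp]: "fsmult c t w = c * t w" by (simp add: fsmult_def)

lemma module_fsmult: "module (fsmult :: 'k::field \<Rightarrow> ('a list \<Rightarrow> 'k) \<Rightarrow> _)"
  by unfold_locales (auto simp: fsmult_def fun_eq_iff algebra_simps)

interpretation T: module "fsmult :: 'k::field \<Rightarrow> ('a list \<Rightarrow> 'k) \<Rightarrow> _"
  by (rule module_fsmult)

definition supp :: "('a \<Rightarrow> 'k::field) \<Rightarrow> 'a set" where "supp t = {w. t w \<noteq> 0}"

abbreviation fin :: "('a \<Rightarrow> 'k::field) \<Rightarrow> bool" where "fin t \<equiv> finite (supp t)"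

lemma word_apply: "word w v = (if v = w then 1 else 0)" by (simp add: word_def)

lemma supp_word[simp]: "supp (word w :: _ \<Rightarrow> 'k::field) = {w}"
  by (auto simp: supp_def word_def)

lemma fin_zero[simp]: "fin 0" by (simp add: supp_def)
lemma supp_add: "supp (s + t) \<subseteq> supp s \<union> supp t" by (auto simp: supp_def)
lemma supp_diff: "supp (s - t) \<subseteq> supp s \<union> supp t" by (auto simp: supp_def)
lemma supp_uminus[simp]: "supp (- t) = supp t" by (auto simp: supp_def)
lemma supp_smult: "supp (fsmult c t) \<subseteq> supp t" by (auto simp: supp_def)
lemma fin_add[simp,intro]: "fin s \<Longrightarrow> fin t \<Longrightarrow> fin (s + t)"
  by (meson finite_UnI finite_subset supp_add)
lemma fin_diff[simp,intro]: "fin s \<Longrightarrow> fin t \<Longrightarrow> fin (s - t)"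
  by (meson finite_UnI finite_subset supp_diff)
lemma fin_uminus[simp,intro]: "fin t \<Longrightarrow> fin (- t)" by simp
lemma fin_smult[simp,intro]: "fin t \<Longrightarrow> fin (fsmult c t)"
  by (meson finite_subset supp_smult)
lemma supp_sum: "supp (\<Sum>i\<in>I. g i) \<subseteq> (\<Union>i\<in>I. supp (g i))"
proof
  fix w assume "w \<in> supp (\<Sum>i\<in>I. g i)"
  then have "(\<Sum>i\<in>I. g i w) \<noteq> 0" by (simp add: supp_def sum_fun_apply)
  then obtain i where "i \<in> I" "g i w \<noteq> 0" by (meson sum.neutral)
  then show "w \<in> (\<Union>i\<in>I. supp (g i))" by (auto simp: supp_def)
qed
lemma fin_sum[intro]: "finite I \<Longrightarrow> (\<And>i. i \<in> I \<Longrightarrow> fin (g i)) \<Longrightarrow> fin (\<Sum>i\<in>I. g i)"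
  by (rule finite_subset[OF supp_sum]) auto
lemma fin_word[simp,intro]: "fin (word w :: _ \<Rightarrow> 'k::field)" by simp

lemma lin_ext_eq:
  assumes "supp t \<subseteq> S" "finite S"
  shows "lin_ext f t = (\<Sum>w\<in>S. fsmult (t w) (f w))"
proof
  fix v
  have "lin_ext f t v = (\<Sum>w\<in>supp t. t w * f w v)" by (simp add: lin_ext_def supp_def)
  also have "\<dots> = (\<Sum>w\<in>S. t w * f w v)"
    by (rule sum.mono_neutral_left) (use assms in \<open>auto simp: supp_def\<close>)
  finally show "lin_ext f t v = (\<Sum>w\<in>S. fsmult (t w) (f w)) v" by (simp add: sum_fun_apply)
qed

lemma lin_ext_add:
  assumes "fin s" "fin t" shows "lin_ext f (s + t) = lin_ext f s + lin_ext f t"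
proof -
  let ?S = "supp s \<union> supp t"
  have "lin_ext f (s + t) = (\<Sum>w\<in>?S. fsmult ((s+t) w) (f w))"
    using assms supp_add[of s t] by (intro lin_ext_eq) auto
  also have "\<dots> = (\<Sum>w\<in>?S. fsmult (s w) (f w)) + (\<Sum>w\<in>?S. fsmult (t w) (f w))"
    by (simp add: fsmult_def sum.distrib[symmetric] algebra_simps fun_eq_iff sum_fun_apply)
  also have "\<dots> = lin_ext f s + lin_ext f t"
    using assms by (simp add: lin_ext_eq[of s ?S] lin_ext_eq[of t ?S])
  finally show ?thesis .
qed

lemma lin_ext_smult:
  assumes "fin t" shows "lin_ext f (fsmult c t) = fsmult c (lin_ext f t)"
proof -
  have "lin_ext f (fsmult c t) = (\<Sum>w\<in>supp t. fsmult (c * t w) (f w))"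
    using assms supp_smult by (subst lin_ext_eq) auto
  also have "\<dots> = fsmult c (\<Sum>w\<in>supp t. fsmult (t w) (f w))"
    by (simp add: fsmult_def fun_eq_iff sum_fun_apply sum_distrib_left algebra_simps)
  also have "\<dots> = fsmult c (lin_ext f t)" using assms by (simp only: lin_ext_eq[OF order.refl])
  finally show ?thesis .
qed

lemma lin_ext_zero[simp]: "lin_ext f 0 = 0"
  by (simp add: lin_ext_def fun_eq_iff)

lemma lin_ext_uminus:
  assumes "fin t" shows "lin_ext f (- t) = - lin_ext f t"
proof -
  have e: "- t = fsmult (-1) t" by (simp add: fun_eq_iff)
  have "lin_ext f (- t) = fsmult (-1) (lin_ext f t)" unfolding e using assms by (rule lin_ext_smult)
  then show ?thesis by (simp add: fun_eq_iff)
qed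

lemma lin_ext_diff:
  assumes "fin s" "fin t" shows "lin_ext f (s - t) = lin_ext f s - lin_ext f t"
  using lin_ext_add[of s "-t" f] lin_ext_uminus[of t f] assms by simp

lemma lin_ext_sum:
  assumes "finite I" "\<And>i. i \<in> I \<Longrightarrow> fin (g i)"
  shows "lin_ext f (\<Sum>i\<in>I. g i) = (\<Sum>i\<in>I. lin_ext f (g i))"
  using assms
proof (induction I rule: finite_induct)
  case (insert x F)
  have "fin (sum g F)" using insert by (intro fin_sum) auto
  have "fin (g x)" using insert by auto
  then show ?case using insert \<open>fin (sum g F)\<close>
    by (simp only: sum.insert[OF insert(1,2)] lin_ext_add) (simp add: insert.IH insert.prems)
qed simp

lemma lin_ext_word[simp]: "lin_ext f (word w) = f w"
  by (subst lin_ext_eq[of _ "{w}"]) (auto simp: fun_eq_iff word_apply)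

lemma lin_ext_cong: "(\<And>w. w \<in> supp t \<Longrightarrow> f w = g w) \<Longrightarrow> lin_ext f t = lin_ext g t"
  by (simp add: lin_ext_def supp_def)

lemma supp_lin_ext: "supp (lin_ext f t) \<subseteq> (\<Union>w\<in>supp t. supp (f w))"
proof
  fix v assume "v \<in> supp (lin_ext f t)"
  then have "(\<Sum>w\<in>{w. t w \<noteq> 0}. t w * f w v) \<noteq> 0" by (simp add: supp_def lin_ext_def)
  then obtain w where "w \<in> {w. t w \<noteq> 0}" "t w * f w v \<noteq> 0" by (meson sum.neutral)
  then show "v \<in> (\<Union>w\<in>supp t. supp (f w))" by (auto simp: supp_def)
qed

lemma fin_lin_ext[intro]: "fin t \<Longrightarrow> (\<And>w. w \<in> supp t \<Longrightarrow> fin (f w)) \<Longrightarrow> fin (lin_ext f t)"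
  by (rule finite_subset[OF supp_lin_ext]) auto

lemma lin_ext_comp:
  assumes "fin t" "\<And>w. w \<in> supp t \<Longrightarrow> fin (f w)"
  shows "lin_ext g (lin_ext f t) = lin_ext (\<lambda>w. lin_ext g (f w)) t"
proof -
  have "lin_ext g (lin_ext f t) = lin_ext g (\<Sum>w\<in>supp t. fsmult (t w) (f w))"
    using assms by (simp add: lin_ext_eq[of t "supp t"])
  also have "\<dots> = (\<Sum>w\<in>supp t. fsmult (t w) (lin_ext g (f w)))"
    using assms by (simp add: lin_ext_sum lin_ext_smult)
  also have "\<dots> = lin_ext (\<lambda>w. lin_ext g (f w)) t"
    using assms by (simp add: lin_ext_eq[of t "supp t"])
  finally show ?thesis .
qed

lemma lin_ext_sum_words:
  assumes "finite I"
  shows "lin_ext f (\<Sum>i\<in>I. fsmult (c i) (word (w i))) = (\<Sum>i\<in>I. fsmult (c i) (f (w i)))"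
  using assms by (simp add: lin_ext_sum lin_ext_smult)

lemma lin_ext_in_span:
  assumes "fin t" "\<And>w. w \<in> supp t \<Longrightarrow> f w \<in> T.span S"
  shows "lin_ext f t \<in> T.span S"
  using assms by (simp add: lin_ext_eq[of t "supp t"] T.span_sum T.span_scale)

lemma supp_lin_ext_len:
  assumes "\<And>w. w \<in> supp t \<Longrightarrow> supp (f w) \<subseteq> L"
  shows "supp (lin_ext f t) \<subseteq> L"
  using supp_lin_ext[of f t] assms by blast


locale tens = vector_space scale for scale :: "'k::field \<Rightarrow> 'h::ab_group_add \<Rightarrow> 'h"
begin

abbreviation R :: "('h list \<Rightarrow> 'k) set" where "R \<equiv> T.span (tensor_rels scale)"
abbreviation teq (infix "\<approx>" 50) where "s \<approx> t \<equiv> tensor_eq scale s t"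

lemma rels_fin: "g \<in> tensor_rels scale \<Longrightarrow> fin g"
  by (auto simp: tensor_rels_def)

lemma subspace_fin: "T.subspace {t :: 'h list \<Rightarrow> 'k. fin t}"
  by (auto simp: T.subspace_def)

lemma R_fin: "t \<in> R \<Longrightarrow> fin t"
  by (induction rule: T.span_induct) (auto simp: subspace_fin rels_fin)

lemma teq_def': "s \<approx> t \<longleftrightarrow> s - t \<in> R" by (simp add: tensor_eq_def)

lemma teq_refl[simp,intro]: "s \<approx> s" by (simp add: teq_def' T.span_zero)
lemma teq_sym: "s \<approx> t \<Longrightarrow> t \<approx> s"
  unfolding teq_def' by (drule T.span_neg) simp
lemma teq_trans[trans]: "s \<approx> t \<Longrightarrow> t \<approx> u \<Longrightarrow> s \<approx> u"
  unfolding teq_def' by (drule (1) T.span_add) simp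
lemma teq_eq_trans[trans]: "s = t \<Longrightarrow> t \<approx> u \<Longrightarrow> s \<approx> u" by simp
lemma eq_teq_trans[trans]: "s \<approx> t \<Longrightarrow> t = u \<Longrightarrow> s \<approx> u" by simp
lemma teq_add: "s \<approx> s' \<Longrightarrow> t \<approx> t' \<Longrightarrow> s + t \<approx> s' + t'"
  unfolding teq_def' by (drule (1) T.span_add) (simp add: algebra_simps)
lemma teq_diff: "s \<approx> s' \<Longrightarrow> t \<approx> t' \<Longrightarrow> s - t \<approx> s' - t'"
  unfolding teq_def' by (drule (1) T.span_diff) (simp add: algebra_simps)
lemma teq_uminus: "s \<approx> s' \<Longrightarrow> - s \<approx> - s'"
  unfolding teq_def' by (drule T.span_neg) (simp add: algebra_simps)
lemma teq_smult: "s \<approx> s' \<Longrightarrow> fsmult c s \<approx> fsmult c s'"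
  unfolding teq_def' by (drule T.span_scale[of _ _ c]) (simp add: fsmult_def algebra_simps fun_diff_def)
lemma teq_sum: "(\<And>i. i \<in> I \<Longrightarrow> f i \<approx> g i) \<Longrightarrow> (\<Sum>i\<in>I. f i) \<approx> (\<Sum>i\<in>I. g i)"
  by (induction I rule: infinite_finite_induct) (auto intro: teq_add)
lemma teq_0: "s \<approx> 0 \<longleftrightarrow> s \<in> R" by (simp add: teq_def')
lemma teq_diff0: "s \<approx> t \<longleftrightarrow> s - t \<approx> 0" by (simp add: teq_def')
lemma R_teq0: "s \<in> R \<Longrightarrow> s \<approx> 0" by (simp add: teq_def')

definition resp :: "('h list \<Rightarrow> ('h list \<Rightarrow> 'k)) \<Rightarrow> bool" where
  "resp f \<longleftrightarrow> (\<forall>u a b v. f (u @ (a + b) # v) \<approx> f (u @ a # v) + f (u @ b # v)) \<and>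
               (\<forall>u c a v. f (u @ scale c a # v) \<approx> fsmult c (f (u @ a # v)))"

lemma respI:
  assumes "\<And>u a b v. f (u @ (a + b) # v) \<approx> f (u @ a # v) + f (u @ b # v)"
    and "\<And>u c a v. f (u @ scale c a # v) \<approx> fsmult c (f (u @ a # v))"
  shows "resp f" using assms by (simp add: resp_def)

lemma lin_ext_R:
  assumes "resp f" "t \<in> R" shows "lin_ext f t \<in> R"
proof -
  have P: "fin g \<and> lin_ext f g \<in> R" if base: "g \<in> tensor_rels scale" for g
  proof (cases rule: UnE[OF base[unfolded tensor_rels_def]])
    case 1
    then obtain u a b v where g: "g = word (u @ (a + b) # v) - word (u @ a # v) - word (u @ b # v)"
      by blast
    have "lin_ext f g = f (u @ (a + b) # v) - f (u @ a # v) - f (u @ b # v)"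
      unfolding g by (simp add: lin_ext_diff)
    also have "\<dots> \<in> R" using assms(1) unfolding resp_def teq_def' by (simp add: algebra_simps)
    finally show ?thesis using rels_fin[OF base] by simp
  next
    case 2
    then obtain u c a v where g: "g = word (u @ scale c a # v) - fsmult c (word (u @ a # v))"
      by blast
    have "lin_ext f g = f (u @ scale c a # v) - fsmult c (f (u @ a # v))"
      unfolding g by (simp add: lin_ext_diff lin_ext_smult)
    also have "\<dots> \<in> R" using assms(1) unfolding resp_def teq_def' by simp
    finally show ?thesis using rels_fin[OF base] by simp
  qed
  have sub: "T.subspace {t. fin t \<and> lin_ext f t \<in> R}"
    unfolding T.subspace_def
    by (auto simp: lin_ext_add lin_ext_smult T.span_add T.span_scale T.span_zero)
  have "fin t \<and> lin_ext f t \<in> R"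
    using T.span_induct[OF assms(2), of "\<lambda>t. fin t \<and> lin_ext f t \<in> R"] sub P by simp
  then show ?thesis by simp
qed

lemma resp_teq:
  assumes "resp f" "fin s" "fin t" "s \<approx> t" shows "lin_ext f s \<approx> lin_ext f t"
  using lin_ext_R[OF assms(1), of "s - t"] assms by (simp add: teq_def' lin_ext_diff)

lemma resp_teq0:
  assumes "resp f" "fin s" "s \<approx> 0" shows "lin_ext f s \<approx> 0"
  using resp_teq[OF assms(1,2) _ assms(3)] by simp

lemma lin_ext_teq:
  assumes "fin t" "\<And>w. w \<in> supp t \<Longrightarrow> f w \<approx> g w" shows "lin_ext f t \<approx> lin_ext g t"
proof -
  have "lin_ext f t = (\<Sum>w\<in>supp t. fsmult (t w) (f w))" using assms by (simp add: lin_ext_eq[of t "supp t"])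
  also have "\<dots> \<approx> (\<Sum>w\<in>supp t. fsmult (t w) (g w))" using assms by (intro teq_sum teq_smult) auto
  also have "\<dots> = lin_ext g t" using assms by (simp add: lin_ext_eq[of t "supp t"])
  finally show ?thesis .
qed

lemma MLin_add: "word (u @ (a + b) # v) \<approx> word (u @ a # v) + word (u @ b # v)"
proof -
  have "word (u @ (a + b) # v) - word (u @ a # v) - word (u @ b # v) \<in> R"
    by (rule T.span_base) (auto simp: tensor_rels_def)
  then show ?thesis by (simp add: teq_def' algebra_simps)
qed

lemma MLin_scale: "word (u @ scale c a # v) \<approx> fsmult c (word (u @ a # v))"
proof -
  have "word (u @ scale c a # v) - fsmult c (word (u @ a # v)) \<in> R"
    by (rule T.span_base) (unfold tensor_rels_def, blast)
  then show ?thesis by (simp add: teq_def')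
qed

lemma MLin_zero: "word (u @ 0 # v) \<approx> 0"
proof -
  have "word (u @ 0 # v) \<approx> word (u @ 0 # v) + word (u @ 0 # v)" using MLin_add[of u 0 0 v] by simp
  then have "word (u @ 0 # v) - (word (u @ 0 # v) + word (u @ 0 # v)) \<in> R" by (simp add: teq_def')
  then have "- word (u @ 0 # v) \<in> R" by (simp add: algebra_simps)
  then have "- (- word (u @ 0 # v)) \<in> R" by (rule T.span_neg)
  then have "word (u @ 0 # v) \<in> R" by (simp only: minus_minus)
  then show ?thesis by (rule R_teq0)
qed

lemma MLin_sum: "finite I \<Longrightarrow> word (u @ (\<Sum>i\<in>I. g i) # v) \<approx> (\<Sum>i\<in>I. word (u @ g i # v))"
proof (induction I rule: finite_induct)
  case empty then show ?case by (simp only: sum.empty) (rule MLin_zero)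
next
  case (insert x F)
  have "word (u @ (\<Sum>i\<in>insert x F. g i) # v) = word (u @ (g x + (\<Sum>i\<in>F. g i)) # v)"
    using insert by simp
  also have "\<dots> \<approx> word (u @ g x # v) + word (u @ (\<Sum>i\<in>F. g i) # v)" by (rule MLin_add)
  also have "\<dots> \<approx> word (u @ g x # v) + (\<Sum>i\<in>F. word (u @ g i # v))"
    using insert by (intro teq_add) auto
  finally show ?case using insert(1,2) by (subst sum.insert) auto
qed

end


lemma fsmult_add_left: "fsmult (a + b) t = fsmult a t + fsmult b t"
  by (simp add: fun_eq_iff algebra_simps)
lemma fsmult_add_right: "fsmult c (s + t) = fsmult c s + fsmult c t"
  by (simp add: fun_eq_iff algebra_simps)
lemma fsmult_mult: "fsmult (a * b) t = fsmult a (fsmult b t)"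
  by (simp add: fun_eq_iff algebra_simps)
lemma fsmult_zero_right[simp]: "fsmult c 0 = 0"
  by (simp add: fun_eq_iff)
lemma fsmult_zero_left[simp]: "fsmult 0 t = 0"
  by (simp add: fun_eq_iff)
lemma fsmult_one[simp]: "fsmult 1 t = t"
  by (simp add: fun_eq_iff)
lemma word_self[simp]: "word w w = 1" by (simp add: word_apply)

declare fsmult_apply[simp del]

context tens begin

lemma lin_ext_word_id: "fin t \<Longrightarrow> lin_ext word t = t"
  by (auto simp: lin_ext_def supp_def word_apply fun_eq_iff if_distrib cong: if_cong)

lemma lin_ext_plus_fun: "lin_ext (\<lambda>w. f w + g w) t = lin_ext f t + lin_ext g t"
  by (simp add: lin_ext_def fun_eq_iff sum.distrib algebra_simps)

lemma lin_ext_smult_fun: "lin_ext (\<lambda>w. fsmult c (f w)) t = fsmult c (lin_ext f t)"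
  by (simp add: lin_ext_def fun_eq_iff sum_distrib_left algebra_simps fsmult_apply)

lemma lin_ext_zero_fun[simp]: "lin_ext (\<lambda>w. 0) t = 0"
  by (simp add: lin_ext_def fun_eq_iff)

lemma len2_cases:
  assumes "length (u @ x # v) = 2"
  obtains b where "u = []" "v = [b]" | a where "u = [a]" "v = []"
  using assms by (cases u; cases v) auto

lemma len3_cases:
  assumes "length (u @ x # v) = 3"
  obtains b c where "u = []" "v = [b, c]" | a c where "u = [a]" "v = [c]"
    | a b where "u = [a, b]" "v = []"
proof -
  have "length u + length v = 2" using assms by simp
  then show ?thesis using that
    by (cases u; cases v) (auto simp: length_Suc_conv)
qed

lemma resp2I:
  assumes z: "\<And>w. length w \<noteq> 2 \<Longrightarrow> f w = 0"
    and a1: "\<And>a a' b. f [a + a', b] \<approx> f [a, b] + f [a', b]"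
    and s1: "\<And>c a b. f [scale c a, b] \<approx> fsmult c (f [a, b])"
    and a2: "\<And>a b b'. f [a, b + b'] \<approx> f [a, b] + f [a, b']"
    and s2: "\<And>c a b. f [a, scale c b] \<approx> fsmult c (f [a, b])"
  shows "resp f"
proof (rule respI)
  fix u a b v
  show "f (u @ (a + b) # v) \<approx> f (u @ a # v) + f (u @ b # v)"
  proof (cases "length (u @ a # v) = 2")
    case True
    then show ?thesis by (cases rule: len2_cases) (auto intro: a1 a2)
  next
    case False then show ?thesis using z[of "u @ _ # v"] by simp
  qed
next
  fix u c a v
  show "f (u @ scale c a # v) \<approx> fsmult c (f (u @ a # v))"
  proof (cases "length (u @ a # v) = 2")
    case True
    then show ?thesis by (cases rule: len2_cases) (auto intro: s1 s2)
  next
    case False then show ?thesis using z[of "u @ _ # v"] by simp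
  qed
qed

lemma resp3I:
  assumes z: "\<And>w. length w \<noteq> 3 \<Longrightarrow> f w = 0"
    and a1: "\<And>a a' b d. f [a + a', b, d] \<approx> f [a, b, d] + f [a', b, d]"
    and s1: "\<And>c a b d. f [scale c a, b, d] \<approx> fsmult c (f [a, b, d])"
    and a2: "\<And>a b b' d. f [a, b + b', d] \<approx> f [a, b, d] + f [a, b', d]"
    and s2: "\<And>c a b d. f [a, scale c b, d] \<approx> fsmult c (f [a, b, d])"
    and a3: "\<And>a b d d'. f [a, b, d + d'] \<approx> f [a, b, d] + f [a, b, d']"
    and s3: "\<And>c a b d. f [a, b, scale c d] \<approx> fsmult c (f [a, b, d])"
  shows "resp f"
proof (rule respI)
  fix u a b v
  show "f (u @ (a + b) # v) \<approx> f (u @ a # v) + f (u @ b # v)"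
  proof (cases "length (u @ a # v) = 3")
    case True
    then show ?thesis by (cases rule: len3_cases) (auto intro: a1 a2 a3)
  next
    case False then show ?thesis using z[of "u @ _ # v"] by simp
  qed
next
  fix u c a v
  show "f (u @ scale c a # v) \<approx> fsmult c (f (u @ a # v))"
  proof (cases "length (u @ a # v) = 3")
    case True
    then show ?thesis by (cases rule: len3_cases) (auto intro: s1 s2 s3)
  next
    case False then show ?thesis using z[of "u @ _ # v"] by simp
  qed
qed

definition ctx :: "'h list \<Rightarrow> 'h list \<Rightarrow> 'h list \<Rightarrow> ('h list \<Rightarrow> 'k)" where
  "ctx p r w = word (p @ w @ r)"

lemma resp_ctx: "resp (ctx p r)"
proof (rule respI)
  fix u a b v
  show "ctx p r (u @ (a + b) # v) \<approx> ctx p r (u @ a # v) + ctx p r (u @ b # v)"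
    using MLin_add[of "p @ u" a b "v @ r"] by (simp add: ctx_def)
next
  fix u c a v
  show "ctx p r (u @ scale c a # v) \<approx> fsmult c (ctx p r (u @ a # v))"
    using MLin_scale[of "p @ u" c a "v @ r"] by (simp add: ctx_def)
qed

lemma fin_ctx[simp,intro]: "fin (ctx p r w)" by (simp add: ctx_def)

lemma ctx_teq: "fin s \<Longrightarrow> fin t \<Longrightarrow> s \<approx> t \<Longrightarrow> lin_ext (ctx p r) s \<approx> lin_ext (ctx p r) t"
  by (rule resp_teq[OF resp_ctx])

lemma ctx_R: "t \<in> R \<Longrightarrow> lin_ext (ctx p r) t \<in> R"
  by (rule lin_ext_R[OF resp_ctx])

lemma ctx_nil[simp]: "fin t \<Longrightarrow> lin_ext (ctx [] []) t = t"
  by (simp add: ctx_def[abs_def] lin_ext_word_id)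

definition lfun :: "('h \<Rightarrow> 'k) \<Rightarrow> bool" where
  "lfun \<phi> \<longleftrightarrow> (\<forall>x y. \<phi> (x + y) = \<phi> x + \<phi> y) \<and> (\<forall>c x. \<phi> (scale c x) = c * \<phi> x)"

definition ctf :: "('h \<Rightarrow> 'k) \<Rightarrow> 'h list \<Rightarrow> ('h list \<Rightarrow> 'k)" where
  "ctf \<phi> w = (case w of [] \<Rightarrow> 0 | a # w' \<Rightarrow> fsmult (\<phi> a) (word w'))"

lemma resp_ctf: assumes "lfun \<phi>" shows "resp (ctf \<phi>)"
proof (rule respI)
  fix u a b v
  show "ctf \<phi> (u @ (a + b) # v) \<approx> ctf \<phi> (u @ a # v) + ctf \<phi> (u @ b # v)"
  proof (cases u)
    case Nil
    have "\<phi> (a + b) = \<phi> a + \<phi> b" using assms by (simp add: lfun_def)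
    then show ?thesis using Nil by (simp add: ctf_def fsmult_add_left)
  next
    case (Cons x u')
    have "fsmult (\<phi> x) (word (u' @ (a + b) # v)) \<approx> fsmult (\<phi> x) (word (u' @ a # v) + word (u' @ b # v))"
      by (intro teq_smult MLin_add)
    then show ?thesis using Cons by (simp add: ctf_def fsmult_add_right mult.commute)
  qed
next
  fix u c a v
  show "ctf \<phi> (u @ scale c a # v) \<approx> fsmult c (ctf \<phi> (u @ a # v))"
  proof (cases u)
    case Nil
    have e: "\<phi> (scale c a) = c * \<phi> a" using assms by (simp add: lfun_def)
    have "ctf \<phi> (u @ scale c a # v) = fsmult (c * \<phi> a) (word v)" using Nil e by (simp add: ctf_def)
    also have "\<dots> = fsmult c (ctf \<phi> (u @ a # v))" using Nil by (simp add: ctf_def)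
    finally show ?thesis by simp
  next
    case (Cons x u')
    have "fsmult (\<phi> x) (word (u' @ scale c a # v)) \<approx> fsmult (\<phi> x) (fsmult c (word (u' @ a # v)))"
      by (intro teq_smult MLin_scale)
    then show ?thesis using Cons by (simp add: ctf_def fsmult_add_right mult.commute)
  qed
qed

lemma ctf_ctx: "fin t \<Longrightarrow> lin_ext (ctf \<phi>) (lin_ext (ctx [a] []) t) = fsmult (\<phi> a) t"
  by (subst lin_ext_comp) (auto simp: ctx_def ctf_def lin_ext_smult_fun[of "\<phi> a" word] lin_ext_word_id)

definition ctl :: "('h \<Rightarrow> 'k) \<Rightarrow> 'h list \<Rightarrow> ('h list \<Rightarrow> 'k)" where
  "ctl \<phi> w = (if w = [] then 0 else fsmult (\<phi> (last w)) (word (butlast w)))"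

lemma resp_ctl: assumes "lfun \<phi>" shows "resp (ctl \<phi>)"
proof (rule respI)
  fix u a b v
  show "ctl \<phi> (u @ (a + b) # v) \<approx> ctl \<phi> (u @ a # v) + ctl \<phi> (u @ b # v)"
  proof (cases "v = []")
    case True
    have "\<phi> (a + b) = \<phi> a + \<phi> b" using assms by (simp add: lfun_def)
    then show ?thesis using True by (simp add: ctl_def fsmult_add_left)
  next
    case False
    have "fsmult (\<phi> (last v)) (word (u @ (a + b) # butlast v)) \<approx> fsmult (\<phi> (last v)) (word (u @ a # butlast v) + word (u @ b # butlast v))"
      by (intro teq_smult MLin_add)
    then show ?thesis using False by (simp add: ctl_def fsmult_add_right mult.commute butlast_append)
  qed
next
  fix u c a v
  show "ctl \<phi> (u @ scale c a # v) \<approx> fsmult c (ctl \<phi> (u @ a # v))"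
  proof (cases "v = []")
    case True
    have e: "\<phi> (scale c a) = c * \<phi> a" using assms by (simp add: lfun_def)
    have "ctl \<phi> (u @ scale c a # v) = fsmult (c * \<phi> a) (word u)" using True e by (simp add: ctl_def)
    also have "\<dots> = fsmult c (ctl \<phi> (u @ a # v))" using True by (simp add: ctl_def)
    finally show ?thesis by simp
  next
    case False
    have "fsmult (\<phi> (last v)) (word (u @ scale c a # butlast v)) \<approx> fsmult (\<phi> (last v)) (fsmult c (word (u @ a # butlast v)))"
      by (intro teq_smult MLin_scale)
    then show ?thesis using False by (simp add: ctl_def fsmult_add_right mult.commute butlast_append)
  qed
qed

lemma ctl_ctx: "fin t \<Longrightarrow> lin_ext (ctl \<phi>) (lin_ext (ctx [] [b]) t) = fsmult (\<phi> b) t"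
  by (subst lin_ext_comp) (auto simp: ctx_def ctl_def lin_ext_smult_fun[of "\<phi> b" word] lin_ext_word_id)

definition lmap :: "('h \<Rightarrow> 'h) \<Rightarrow> bool" where
  "lmap h \<longleftrightarrow> (\<forall>x y. h (x + y) = h x + h y) \<and> (\<forall>c x. h (scale c x) = scale c (h x))"

definition ap0 :: "('h \<Rightarrow> 'h) \<Rightarrow> 'h list \<Rightarrow> ('h list \<Rightarrow> 'k)" where
  "ap0 h w = (case w of [] \<Rightarrow> 0 | a # w' \<Rightarrow> word (h a # w'))"

lemma resp_ap0: assumes "lmap h" shows "resp (ap0 h)"
proof (rule respI)
  fix u a b v
  show "ap0 h (u @ (a + b) # v) \<approx> ap0 h (u @ a # v) + ap0 h (u @ b # v)"
  proof (cases u)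
    case Nil then show ?thesis using assms MLin_add[of "[]" "h a" "h b" v]
      by (simp add: ap0_def lmap_def)
  next
    case (Cons x u')
    then show ?thesis using MLin_add[of "h x # u'" a b v] by (simp add: ap0_def)
  qed
next
  fix u c a v
  show "ap0 h (u @ scale c a # v) \<approx> fsmult c (ap0 h (u @ a # v))"
  proof (cases u)
    case Nil then show ?thesis using assms MLin_scale[of "[]" c "h a" v]
      by (simp add: ap0_def lmap_def)
  next
    case (Cons x u')
    then show ?thesis using MLin_scale[of "h x # u'" c a v] by (simp add: ap0_def)
  qed
qed

lemma flip23_alt: "flip23 w = (if length w = 3 then word [w!0, w!2, w!1] else 0)"
  by (cases w rule: flip23.cases) auto

lemma resp_flip: "resp (flip23 :: 'h list \<Rightarrow> ('h list \<Rightarrow> 'k))"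
  by (rule resp3I) (auto simp: flip23_alt intro: MLin_add[of "[_]" _ _ "[_]", simplified]
      MLin_add[of "[]" _ _ "[_,_]", simplified] MLin_add[of "[_,_]" _ _ "[]", simplified]
      MLin_scale[of "[_]" _ _ "[_]", simplified]
      MLin_scale[of "[]" _ _ "[_,_]", simplified] MLin_scale[of "[_,_]" _ _ "[]", simplified])

definition hsum :: "('h list \<Rightarrow> 'h) \<Rightarrow> ('h list \<Rightarrow> 'k) \<Rightarrow> 'h" where
  "hsum \<nu> t = (\<Sum>w\<in>supp t. scale (t w) (\<nu> w))"

lemma hsum_eq: "supp t \<subseteq> S \<Longrightarrow> finite S \<Longrightarrow> hsum \<nu> t = (\<Sum>w\<in>S. scale (t w) (\<nu> w))"
  unfolding hsum_def by (rule sum.mono_neutral_left) (auto simp: supp_def)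

lemma hsum_add: "fin s \<Longrightarrow> fin t \<Longrightarrow> hsum \<nu> (s + t) = hsum \<nu> s + hsum \<nu> t"
  using hsum_eq[of "s+t" "supp s \<union> supp t"] hsum_eq[of s "supp s \<union> supp t"]
    hsum_eq[of t "supp s \<union> supp t"] supp_add[of s t]
  by (simp add: scale_left_distrib sum.distrib)

lemma hsum_smult: "fin t \<Longrightarrow> hsum \<nu> (fsmult c t) = scale c (hsum \<nu> t)"
  using hsum_eq[of "fsmult c t" "supp t"] supp_smult[of c t]
  by (simp add: hsum_def scale_sum_right fsmult_apply)

lemma hsum_word[simp]: "hsum \<nu> (word w) = \<nu> w"
  by (simp add: hsum_def)

lemma hsum_zero[simp]: "hsum \<nu> 0 = 0" by (simp add: hsum_def supp_def)

lemma hsum_diff: "fin s \<Longrightarrow> fin t \<Longrightarrow> hsum \<nu> (s - t) = hsum \<nu> s - hsum \<nu> t"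
proof -
  assume a: "fin s" "fin t"
  have e: "- t = fsmult (-1) t" by (simp add: fun_eq_iff fsmult_apply)
  have "hsum \<nu> (- t) = scale (-1) (hsum \<nu> t)" unfolding e using a by (simp only: hsum_smult)
  then have "hsum \<nu> (- t) = - hsum \<nu> t" by (simp add: scale_minus_left)
  then show ?thesis using hsum_add[of s "- t" \<nu>] a by simp
qed

lemma hsum_sum: "finite I \<Longrightarrow> (\<And>i. i \<in> I \<Longrightarrow> fin (g i)) \<Longrightarrow> hsum \<nu> (\<Sum>i\<in>I. g i) = (\<Sum>i\<in>I. hsum \<nu> (g i))"
proof (induction I rule: finite_induct)
  case (insert x F)
  have "fin (sum g F)" using insert by (intro fin_sum) auto
  have "fin (g x)" using insert by auto
  then show ?case using insert \<open>fin (sum g F)\<close>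
    by (simp only: sum.insert[OF insert(1,2)] hsum_add) (simp add: insert.IH insert.prems)
qed simp

definition hresp :: "('h list \<Rightarrow> 'h) \<Rightarrow> bool" where
  "hresp \<nu> \<longleftrightarrow> (\<forall>u a b v. \<nu> (u @ (a + b) # v) = \<nu> (u @ a # v) + \<nu> (u @ b # v)) \<and>
               (\<forall>u c a v. \<nu> (u @ scale c a # v) = scale c (\<nu> (u @ a # v)))"

lemma hsum_R:
  assumes "hresp \<nu>" "t \<in> R" shows "hsum \<nu> t = 0"
proof -
  have P: "fin g \<and> hsum \<nu> g = 0" if base: "g \<in> tensor_rels scale" for g
  proof (cases rule: UnE[OF base[unfolded tensor_rels_def]])
    case 1
    then obtain u a b v where g: "g = word (u @ (a + b) # v) - word (u @ a # v) - word (u @ b # v)"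
      by blast
    show ?thesis using rels_fin[OF base] assms(1) unfolding g hresp_def by (simp add: hsum_diff)
  next
    case 2
    then obtain u c a v where g: "g = word (u @ scale c a # v) - fsmult c (word (u @ a # v))"
      by blast
    show ?thesis using rels_fin[OF base] assms(1) unfolding g hresp_def by (simp add: hsum_diff hsum_smult)
  qed
  have sub: "T.subspace {t. fin t \<and> hsum \<nu> t = 0}"
    unfolding T.subspace_def by (auto simp: hsum_add hsum_smult)
  show ?thesis
    using T.span_induct[OF assms(2), of "\<lambda>t. fin t \<and> hsum \<nu> t = 0"] sub P by simp
qed

lemma hsum_teq: "hresp \<nu> \<Longrightarrow> fin s \<Longrightarrow> fin t \<Longrightarrow> s \<approx> t \<Longrightarrow> hsum \<nu> s = hsum \<nu> t"
  using hsum_R[of \<nu> "s - t"] by (simp add: teq_def' hsum_diff)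

end


context tens begin

lemma dual_exists:
  assumes "independent B" "b \<in> B"
  shows "\<exists>\<phi>. lfun \<phi> \<and> (\<forall>b'\<in>B. \<phi> b' = (if b' = b then 1 else 0))"
proof -
  let ?E = "extend_basis B"
  have iE: "independent ?E" by (rule independent_extend_basis[OF assms(1)])
  have sE: "span ?E = UNIV" by (rule span_extend_basis[OF assms(1)])
  have lin: "Vector_Spaces.linear scale (*) (\<lambda>v. representation ?E v b)"
    by (rule linear_representation[OF iE sE])
  have "lfun (\<lambda>v. representation ?E v b)"
    using lin unfolding Vector_Spaces.linear_iff lfun_def by simp
  moreover have "representation ?E b' b = (if b' = b then 1 else 0)" if "b' \<in> B" for b'
  proof -
    have "b' \<in> ?E" using extend_basis_superset[OF assms(1)] that by auto
    then show ?thesis using representation_basis[OF iE] by auto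
  qed
  ultimately show ?thesis by blast
qed

lemma nonzero_dual:
  assumes "x \<noteq> 0" shows "\<exists>\<phi>. lfun \<phi> \<and> \<phi> x = 1"
proof -
  have "independent {x}" using assms by (simp add: independent_insert)
  then show ?thesis using dual_exists[of "{x}" x] by auto
qed

lemma slot_add:
  assumes "fin t"
  shows "lin_ext (\<lambda>w. word (p w @ (a + a') # q w)) t \<approx>
           lin_ext (\<lambda>w. word (p w @ a # q w)) t + lin_ext (\<lambda>w. word (p w @ a' # q w)) t"
proof -
  have "lin_ext (\<lambda>w. word (p w @ (a + a') # q w)) t \<approx> lin_ext (\<lambda>w. word (p w @ a # q w) + word (p w @ a' # q w)) t"
    using assms by (intro lin_ext_teq MLin_add)
  then show ?thesis by (simp only: lin_ext_plus_fun)
qed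

lemma slot_scale:
  assumes "fin t"
  shows "lin_ext (\<lambda>w. word (p w @ scale c a # q w)) t \<approx> fsmult c (lin_ext (\<lambda>w. word (p w @ a # q w)) t)"
proof -
  have "lin_ext (\<lambda>w. word (p w @ scale c a # q w)) t \<approx> lin_ext (\<lambda>w. fsmult c (word (p w @ a # q w))) t"
    using assms by (intro lin_ext_teq MLin_scale)
  then show ?thesis by (simp only: lin_ext_smult_fun)
qed

lemma w2s1: "fsmult c (word [a, b]) \<approx> word [scale c a, b]"
  using teq_sym[OF MLin_scale[of "[]" c a "[b]"]] by simp
lemma w2s2: "fsmult c (word [a, b]) \<approx> word [a, scale c b]"
  using teq_sym[OF MLin_scale[of "[a]" c b "[]"]] by simp

lemma EXP2:
  assumes I: "finite I" and B: "finite B" "independent B" and y: "\<And>i. i \<in> I \<Longrightarrow> y i \<in> span B"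
  shows "(\<Sum>i\<in>I. word [x i, y i]) \<approx>
           (\<Sum>b\<in>B. word [\<Sum>i\<in>I. scale (representation B (y i) b) (x i), b])"
proof -
  let ?r = "\<lambda>i b. representation B (y i) b"
  have each: "word [x i, y i] \<approx> (\<Sum>b\<in>B. word [scale (?r i b) (x i), b])" if i: "i \<in> I" for i
  proof -
    have yi: "y i = (\<Sum>b\<in>B. scale (?r i b) b)"
      using sum_representation_eq[OF B(2) y[OF i] B(1) order.refl] by simp
    have "word [x i, y i] = word ([x i] @ (\<Sum>b\<in>B. scale (?r i b) b) # [])" using yi by simp
    also have "\<dots> \<approx> (\<Sum>b\<in>B. word ([x i] @ scale (?r i b) b # []))" by (rule MLin_sum[OF B(1)])
    also have "\<dots> \<approx> (\<Sum>b\<in>B. fsmult (?r i b) (word ([x i] @ b # [])))" by (intro teq_sum MLin_scale)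
    also have "\<dots> \<approx> (\<Sum>b\<in>B. word ([] @ scale (?r i b) (x i) # [b]))" by (simp only: append.simps) (intro teq_sum w2s1)
    finally show ?thesis by simp
  qed
  have "(\<Sum>i\<in>I. word [x i, y i]) \<approx> (\<Sum>i\<in>I. \<Sum>b\<in>B. word [scale (?r i b) (x i), b])"
    using each by (intro teq_sum)
  also have "\<dots> = (\<Sum>b\<in>B. \<Sum>i\<in>I. word ([] @ scale (?r i b) (x i) # [b]))" by (simp add: sum.swap[of _ I])
  also have "\<dots> \<approx> (\<Sum>b\<in>B. word ([] @ (\<Sum>i\<in>I. scale (?r i b) (x i)) # [b]))"
    by (intro teq_sum teq_sym[OF MLin_sum[OF I]])
  finally show ?thesis by simp
qed

lemma EXP1:
  assumes I: "finite I" and B: "finite B" "independent B" and x: "\<And>i. i \<in> I \<Longrightarrow> x i \<in> span B"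
  shows "(\<Sum>i\<in>I. word [x i, y i]) \<approx>
           (\<Sum>b\<in>B. word [b, \<Sum>i\<in>I. scale (representation B (x i) b) (y i)])"
proof -
  let ?r = "\<lambda>i b. representation B (x i) b"
  have each: "word [x i, y i] \<approx> (\<Sum>b\<in>B. word [b, scale (?r i b) (y i)])" if i: "i \<in> I" for i
  proof -
    have xi: "x i = (\<Sum>b\<in>B. scale (?r i b) b)"
      using sum_representation_eq[OF B(2) x[OF i] B(1) order.refl] by simp
    have "word [x i, y i] = word ([] @ (\<Sum>b\<in>B. scale (?r i b) b) # [y i])" using xi by simp
    also have "\<dots> \<approx> (\<Sum>b\<in>B. word ([] @ scale (?r i b) b # [y i]))" by (rule MLin_sum[OF B(1)])
    also have "\<dots> \<approx> (\<Sum>b\<in>B. fsmult (?r i b) (word ([] @ b # [y i])))" by (intro teq_sum MLin_scale)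
    also have "\<dots> \<approx> (\<Sum>b\<in>B. word ([b] @ scale (?r i b) (y i) # []))" by (simp only: append.simps) (intro teq_sum w2s2)
    finally show ?thesis by simp
  qed
  have "(\<Sum>i\<in>I. word [x i, y i]) \<approx> (\<Sum>i\<in>I. \<Sum>b\<in>B. word [b, scale (?r i b) (y i)])"
    using each by (intro teq_sum)
  also have "\<dots> = (\<Sum>b\<in>B. \<Sum>i\<in>I. word ([b] @ scale (?r i b) (y i) # []))" by (simp add: sum.swap[of _ I])
  also have "\<dots> \<approx> (\<Sum>b\<in>B. word ([b] @ (\<Sum>i\<in>I. scale (?r i b) (y i)) # []))"
    by (intro teq_sum teq_sym[OF MLin_sum[OF I]])
  finally show ?thesis by simp
qed

lemma GL:
  assumes ga: "\<And>x y. g (x + y) \<approx> g x + g y" and gs: "\<And>c x. g (scale c x) \<approx> fsmult c (g x)"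
    and t: "fin t"
  shows "lin_ext (\<lambda>w. g (\<nu> w)) t \<approx> g (hsum \<nu> t)"
proof -
  have g0: "g 0 \<approx> 0" using gs[of 0 0] by (simp only: scale_zero_left fsmult_zero_left)
  have gsum: "g (\<Sum>w\<in>S. f w) \<approx> (\<Sum>w\<in>S. g (f w))" if "finite S" for S and f :: "'h list \<Rightarrow> 'h"
    using that
  proof (induction S rule: finite_induct)
    case empty then show ?case using g0 by (simp only: sum.empty)
  next
    case (insert x F)
    have "g (\<Sum>w\<in>insert x F. f w) = g (f x + (\<Sum>w\<in>F. f w))" using insert by simp
    also have "\<dots> \<approx> g (f x) + g (\<Sum>w\<in>F. f w)" by (rule ga)
    also have "\<dots> \<approx> g (f x) + (\<Sum>w\<in>F. g (f w))" using insert by (intro teq_add) auto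
    finally show ?case using insert(1,2) by (subst sum.insert) auto
  qed
  have "lin_ext (\<lambda>w. g (\<nu> w)) t = (\<Sum>w\<in>supp t. fsmult (t w) (g (\<nu> w)))"
    using t by (simp add: lin_ext_eq[of t "supp t"])
  also have "\<dots> \<approx> (\<Sum>w\<in>supp t. g (scale (t w) (\<nu> w)))" by (intro teq_sum teq_sym[OF gs])
  also have "\<dots> \<approx> g (\<Sum>w\<in>supp t. scale (t w) (\<nu> w))" by (rule teq_sym[OF gsum[OF t]])
  finally show ?thesis by (simp add: hsum_def)
qed

end


locale moor = tens scale for scale :: "'k::field_char_0 \<Rightarrow> 'h::ab_group_add \<Rightarrow> 'h" +
  fixes G :: "nat \<Rightarrow> 'h set" and prec :: "'h \<Rightarrow> 'h \<Rightarrow> 'h" and D :: "'h \<Rightarrow> ('h list \<Rightarrow> 'k)"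
  assumes gr: "graded scale G"
    and pl1: "\<And>x. Vector_Spaces.linear scale scale (prec x)"
    and pl2: "\<And>y. Vector_Spaces.linear scale scale (\<lambda>x. prec x y)"
    and Dspan: "\<And>x. D x \<in> T.span (word ` {w. length w = 2})"
    and Dadd: "\<And>x y. D (x + y) \<approx> D x + D y"
    and Dscale: "\<And>c x. D (scale c x) \<approx> fsmult c (D x)"
    and co0: "\<And>x. lin_ext (second_Delta D) (D x) \<approx> 0"
    and co: "\<And>x. lin_ext (first_Delta D) (D x) \<approx> lin_ext flip23 (lin_ext (first_Delta D) (D x))"
    and cp: "\<And>x y. D (prec x y) \<approx> word [x, proj1 G y] + lin_ext (prec_first prec y) (D x)"
begin

lemma prec_add2: "prec x (a + b) = prec x a + prec x b"
  using pl1[of x] unfolding Vector_Spaces.linear_iff by blast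
lemma prec_scale2: "prec x (scale c a) = scale c (prec x a)"
  using pl1[of x] unfolding Vector_Spaces.linear_iff by blast
lemma prec_add1: "prec (a + b) y = prec a y + prec b y"
  using pl2[of y] unfolding Vector_Spaces.linear_iff by blast
lemma prec_scale1: "prec (scale c a) y = scale c (prec a y)"
  using pl2[of y] unfolding Vector_Spaces.linear_iff by blast

lemma lmap_prec: "lmap (\<lambda>a. prec a y)"
  by (simp add: lmap_def prec_add1 prec_scale1)

lemma D_fin_supp: "fin (D x) \<and> supp (D x) \<subseteq> {w. length w = 2}"
proof -
  have sub: "T.subspace {t :: 'h list \<Rightarrow> 'k. fin t \<and> supp t \<subseteq> {w. length w = 2}}"
    unfolding T.subspace_def
  proof (intro conjI ballI allI)
    show "(0::'h list \<Rightarrow> 'k) \<in> {t. fin t \<and> supp t \<subseteq> {w. length w = 2}}" by (simp add: supp_def)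
  next
    fix s t :: "'h list \<Rightarrow> 'k"
    assume "s \<in> {t. fin t \<and> supp t \<subseteq> {w. length w = 2}}" "t \<in> {t. fin t \<and> supp t \<subseteq> {w. length w = 2}}"
    then show "s + t \<in> {t. fin t \<and> supp t \<subseteq> {w. length w = 2}}"
      using supp_add[of s t] by auto
  next
    fix c and t :: "'h list \<Rightarrow> 'k"
    assume "t \<in> {t. fin t \<and> supp t \<subseteq> {w. length w = 2}}"
    then show "fsmult c t \<in> {t. fin t \<and> supp t \<subseteq> {w. length w = 2}}"
      using supp_smult[of c t] by auto
  qed
  have gen: "\<And>y. y \<in> word ` {w. length w = 2} \<Longrightarrow> fin y \<and> supp y \<subseteq> {w. length w = 2}"
    by auto
  show ?thesis
    using T.span_induct[OF Dspan[of x], of "\<lambda>t. fin t \<and> supp t \<subseteq> {w. length w = 2}"] sub gen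
    by blast
qed

lemma D_fin[simp,intro]: "fin (D x)" using D_fin_supp by blast
lemma D_supp: "w \<in> supp (D x) \<Longrightarrow> length w = 2" using D_fin_supp by blast

lemma D0: "D 0 \<approx> 0"
proof -
  have "D (scale 0 0) \<approx> fsmult 0 (D 0)" by (rule Dscale)
  then show ?thesis by (simp only: scale_zero_left fsmult_zero_left)
qed

lemma Dneg: "D (- x) \<approx> - D x"
proof -
  have "D (scale (-1) x) \<approx> fsmult (-1) (D x)" by (rule Dscale)
  moreover have "fsmult (-1) (D x) = - D x" by (simp add: fun_eq_iff fsmult_apply)
  ultimately show ?thesis by (simp add: scale_minus_left)
qed

lemma Ddiff: "D (x - y) \<approx> D x - D y"
proof -
  have "D (x + - y) \<approx> D x + D (- y)" by (rule Dadd)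
  also have "\<dots> \<approx> D x + - D y" by (intro teq_add Dneg) simp
  finally show ?thesis by simp
qed

lemma Dsum: "finite I \<Longrightarrow> D (\<Sum>i\<in>I. f i) \<approx> (\<Sum>i\<in>I. D (f i))"
proof (induction I rule: finite_induct)
  case empty then show ?case using D0 by (simp only: sum.empty)
next
  case (insert x F)
  have "D (\<Sum>i\<in>insert x F. f i) = D (f x + (\<Sum>i\<in>F. f i))" using insert by simp
  also have "\<dots> \<approx> D (f x) + D (\<Sum>i\<in>F. f i)" by (rule Dadd)
  also have "\<dots> \<approx> D (f x) + (\<Sum>i\<in>F. D (f i))" using insert by (intro teq_add) auto
  finally show ?case using insert(1,2) by (subst sum.insert) auto
qed

lemma G1_subspace: "subspace (G 1)"
  using gr unfolding graded_def by simp

lemma proj1_G1: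
  assumes b: "b \<in> G 1" shows "proj1 G b = b"
proof -
  let ?c = "\<lambda>p::nat. if p = 1 then b else 0"
  let ?P = "\<lambda>c. c 0 = 0 \<and> (\<forall>p>0. c p \<in> G p) \<and> finite {p. c p \<noteq> 0} \<and> b = (\<Sum>p\<in>{p. c p \<noteq> 0}. c p)"
  have sub: "\<And>p. p > 0 \<Longrightarrow> subspace (G p)" using gr unfolding graded_def by simp
  have "?P ?c"
  proof (intro conjI allI impI)
    fix p :: nat assume "p > 0"
    then show "?c p \<in> G p" using b subspace_0[OF sub[of p]] by auto
  next
    show "finite {p. ?c p \<noteq> 0}" by (rule finite_subset[of _ "{1}"]) auto
  next
    show "b = (\<Sum>p\<in>{p. ?c p \<noteq> 0}. ?c p)"
    proof (cases "b = 0")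
      case True then show ?thesis by simp
    next
      case False then have "{p. ?c p \<noteq> 0} = {1}" by auto
      then show ?thesis by simp
    qed
  qed simp
  moreover have "\<exists>!c. ?P c" using gr unfolding graded_def by blast
  ultimately have "grade_comp G b = ?c" unfolding grade_comp_def by (rule the1_equality[rotated])
  then show ?thesis by (simp add: proj1_def)
qed

declare second_Delta.simps[simp del] first_Delta.simps[simp del] prec_first.simps[simp del]

lemma sd_alt: "second_Delta D w = (if length w = 2 then lin_ext (ctx [w!0] []) (D (w!1)) else 0)"
  by (cases "(D, w)" rule: second_Delta.cases) (auto simp: ctx_def[abs_def] second_Delta.simps)

lemma pf_alt: "prec_first prec y w = (if length w = 2 then word [prec (w!0) y, w!1] else 0)"
  by (cases "(prec, y, w)" rule: prec_first.cases) (auto simp: prec_first.simps)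

lemma fd_alt: "first_Delta D w = (if w = [] then 0 else lin_ext (ctx [] (tl w)) (D (hd w)))"
  by (cases w) (auto simp: ctx_def[abs_def] first_Delta.simps)

lemma ctx_pre_add: "fin t \<Longrightarrow> lin_ext (ctx (p @ [a + a'] ) r) t \<approx> lin_ext (ctx (p @ [a]) r) t + lin_ext (ctx (p @ [a']) r) t"
  using slot_add[where t=t and p="\<lambda>w. p" and a=a and a'=a' and q="\<lambda>w. w @ r"] by (simp add: ctx_def[abs_def])
lemma ctx_pre_scale: "fin t \<Longrightarrow> lin_ext (ctx (p @ [scale c a] ) r) t \<approx> fsmult c (lin_ext (ctx (p @ [a]) r) t)"
  using slot_scale[where t=t and p="\<lambda>w. p" and c=c and a=a and q="\<lambda>w. w @ r"] by (simp add: ctx_def[abs_def])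
lemma ctx_suf_add: "fin t \<Longrightarrow> lin_ext (ctx pp ((a + a') # r)) t \<approx> lin_ext (ctx pp (a # r)) t + lin_ext (ctx pp (a' # r)) t"
  using slot_add[where t=t and p="\<lambda>w. pp @ w" and a=a and a'=a' and q="\<lambda>w. r"] by (simp add: ctx_def[abs_def])
lemma ctx_suf_scale: "fin t \<Longrightarrow> lin_ext (ctx pp (scale c a # r)) t \<approx> fsmult c (lin_ext (ctx pp (a # r)) t)"
  using slot_scale[where t=t and p="\<lambda>w. pp @ w" and c=c and a=a and q="\<lambda>w. r"] by (simp add: ctx_def[abs_def])

lemma ctx_D_add: "lin_ext (ctx p r) (D (a + b)) \<approx> lin_ext (ctx p r) (D a) + lin_ext (ctx p r) (D b)"
proof -
  have "lin_ext (ctx p r) (D (a + b)) \<approx> lin_ext (ctx p r) (D a + D b)"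
    by (rule ctx_teq) (auto intro: Dadd)
  then show ?thesis by (simp add: lin_ext_add)
qed

lemma ctx_D_scale: "lin_ext (ctx p r) (D (scale c a)) \<approx> fsmult c (lin_ext (ctx p r) (D a))"
proof -
  have "lin_ext (ctx p r) (D (scale c a)) \<approx> lin_ext (ctx p r) (fsmult c (D a))"
    by (rule ctx_teq) (auto intro: Dscale)
  then show ?thesis by (simp add: lin_ext_smult)
qed

lemma resp_sd: "resp (second_Delta D)"
proof (rule resp2I)
  show "\<And>w. length w \<noteq> 2 \<Longrightarrow> second_Delta D w = 0" by (simp add: sd_alt)
  show "second_Delta D [a + a', b] \<approx> second_Delta D [a, b] + second_Delta D [a', b]" for a a' b
    using ctx_pre_add[of "D b" "[]" a a' "[]"] by (simp add: sd_alt)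
  show "second_Delta D [scale c a, b] \<approx> fsmult c (second_Delta D [a, b])" for c a b
    using ctx_pre_scale[of "D b" "[]" c a "[]"] by (simp add: sd_alt)
  show "second_Delta D [a, b + b'] \<approx> second_Delta D [a, b] + second_Delta D [a, b']" for a b b'
    using ctx_D_add by (simp add: sd_alt)
  show "second_Delta D [a, scale c b] \<approx> fsmult c (second_Delta D [a, b])" for c a b
    using ctx_D_scale by (simp add: sd_alt)
qed

lemma resp_fd: "resp (first_Delta D)"
proof (rule respI)
  fix u a b v
  show "first_Delta D (u @ (a + b) # v) \<approx> first_Delta D (u @ a # v) + first_Delta D (u @ b # v)"
  proof (cases u)
    case Nil then show ?thesis using ctx_D_add[of "[]" v a b] by (simp add: fd_alt)
  next
    case (Cons x u')
    then show ?thesis using slot_add[where t="D x" and p="\<lambda>w. w @ u'" and a=a and a'=b and q="\<lambda>w. v"]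
      by (simp add: fd_alt ctx_def[abs_def])
  qed
next
  fix u c a v
  show "first_Delta D (u @ scale c a # v) \<approx> fsmult c (first_Delta D (u @ a # v))"
  proof (cases u)
    case Nil then show ?thesis using ctx_D_scale[of "[]" v c a] by (simp add: fd_alt)
  next
    case (Cons x u')
    then show ?thesis using slot_scale[where t="D x" and p="\<lambda>w. w @ u'" and c=c and a=a and q="\<lambda>w. v"]
      by (simp add: fd_alt ctx_def[abs_def])
  qed
qed

lemma resp_pf: "resp (prec_first prec y)"
proof (rule resp2I)
  show "\<And>w. length w \<noteq> 2 \<Longrightarrow> prec_first prec y w = 0" by (simp add: pf_alt)
  show "prec_first prec y [a + a', b] \<approx> prec_first prec y [a, b] + prec_first prec y [a', b]" for a a' b
    using MLin_add[of "[]" "prec a y" "prec a' y" "[b]"] by (simp add: prec_add1 pf_alt)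
  show "prec_first prec y [scale c a, b] \<approx> fsmult c (prec_first prec y [a, b])" for c a b
    using MLin_scale[of "[]" c "prec a y" "[b]"] by (simp add: prec_scale1 pf_alt)
  show "prec_first prec y [a, b + b'] \<approx> prec_first prec y [a, b] + prec_first prec y [a, b']" for a b b'
    using MLin_add[of "[prec a y]" b b' "[]"] by (simp add: pf_alt)
  show "prec_first prec y [a, scale c b] \<approx> fsmult c (prec_first prec y [a, b])" for c a b
    using MLin_scale[of "[prec a y]" c b "[]"] by (simp add: pf_alt)
qed

end


lemma len2_obtain: assumes "length w = 2" obtains p q where "w = [p, q]"
  using assms by (cases w; cases "tl w") auto

context moor begin

lemma fin_pf[simp,intro]: "fin (prec_first prec y w)" by (simp add: pf_alt)
lemma fin_sd[simp,intro]: "fin (second_Delta D w)" by (auto simp: sd_alt)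
lemma fin_fd[simp,intro]: "fin (first_Delta D w)" by (auto simp: fd_alt)
lemma fin_ap0[simp,intro]: "fin (ap0 h w)" by (auto simp: ap0_def split: list.split)
lemma fin_flip[simp,intro]: "fin (flip23 w :: 'h list \<Rightarrow> 'k)" by (auto simp: flip23_alt)

lemma sd_pf:
  "lin_ext (second_Delta D) (lin_ext (prec_first prec y) (D x)) =
   lin_ext (ap0 (\<lambda>a. prec a y)) (lin_ext (second_Delta D) (D x))"
proof -
  have "lin_ext (second_Delta D) (lin_ext (prec_first prec y) (D x)) =
        lin_ext (\<lambda>w. lin_ext (second_Delta D) (prec_first prec y w)) (D x)"
    by (rule lin_ext_comp) auto
  also have "\<dots> = lin_ext (\<lambda>w. lin_ext (ap0 (\<lambda>a. prec a y)) (second_Delta D w)) (D x)"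
  proof (rule lin_ext_cong)
    fix w assume "w \<in> supp (D x)"
    then obtain p q where w: "w = [p, q]" using D_supp len2_obtain by blast
    have "lin_ext (ap0 (\<lambda>a. prec a y)) (second_Delta D w) =
          lin_ext (\<lambda>u. lin_ext (ap0 (\<lambda>a. prec a y)) (ctx [p] [] u)) (D q)"
      unfolding w sd_alt by (simp, rule lin_ext_comp) auto
    also have "\<dots> = lin_ext (ctx [prec p y] []) (D q)"
      by (rule lin_ext_cong) (simp add: ctx_def ap0_def)
    finally show "lin_ext (second_Delta D) (prec_first prec y w) =
          lin_ext (ap0 (\<lambda>a. prec a y)) (second_Delta D w)"
      by (simp add: w pf_alt sd_alt)
  qed
  also have "\<dots> = lin_ext (ap0 (\<lambda>a. prec a y)) (lin_ext (second_Delta D) (D x))"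
    by (rule lin_ext_comp[symmetric]) auto
  finally show ?thesis .
qed

lemma G1_prim:
  assumes b: "b \<in> G 1" shows "D b \<approx> 0"
proof (cases "\<exists>x::'h. x \<noteq> 0")
  case False
  then have "b = 0" by blast
  then show ?thesis using D0 by simp
next
  case True
  then obtain x :: 'h where x: "x \<noteq> 0" by blast
  obtain \<phi> where \<phi>: "lfun \<phi>" "\<phi> x = 1" using nonzero_dual[OF x] by blast
  let ?SD = "lin_ext (second_Delta D)"
  let ?PF = "lin_ext (prec_first prec b) (D x)"
  let ?C = "lin_ext (ctx [x] []) (D b)"
  have fPF: "fin ?PF" by auto
  have h2: "D (prec x b) \<approx> word [x, b] + ?PF" using cp[of x b] proj1_G1[OF b] by simp
  have z: "?SD ?PF \<approx> 0"
  proof -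
    have "?SD ?PF = lin_ext (ap0 (\<lambda>a. prec a b)) (?SD (D x))" by (rule sd_pf)
    also have "\<dots> \<approx> 0" by (rule resp_teq0[OF resp_ap0[OF lmap_prec]]) (auto intro: co0)
    finally show ?thesis .
  qed
  have "?SD (D (prec x b)) \<approx> ?SD (word [x, b] + ?PF)"
    by (rule resp_teq[OF resp_sd]) (auto intro: h2)
  also have "\<dots> = ?C + ?SD ?PF" using fPF by (simp add: lin_ext_add sd_alt)
  also have "\<dots> \<approx> ?C + 0" using z by (intro teq_add) auto
  finally have "?SD (D (prec x b)) \<approx> ?C + 0" .
  then have c0: "?C \<approx> 0" using co0[of "prec x b"] by (metis add.right_neutral teq_sym teq_trans)
  have "lin_ext (ctf \<phi>) ?C \<approx> 0" by (rule resp_teq0[OF resp_ctf[OF \<phi>(1)] _ c0]) auto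
  then show ?thesis using \<phi>(2) by (simp add: ctf_ctx)
qed

end


context moor begin

lemma supp_ctx_lin: "supp (lin_ext (ctx p r) t) \<subseteq> (\<lambda>u. p @ u @ r) ` supp t"
  using supp_lin_ext[of "ctx p r" t] by (auto simp: ctx_def)

lemma DP_Suc: "Delta_pow D (Suc s) x = lin_ext (first_Delta D) (Delta_pow D s x)"
proof (cases s)
  case 0
  then show ?thesis by (simp add: fd_alt)
next
  case (Suc n) then show ?thesis by simp
qed

lemma DP_fin_supp: "fin (Delta_pow D s x) \<and> supp (Delta_pow D s x) \<subseteq> {w. length w = Suc s}"
proof (induction s)
  case 0 then show ?case by simp
next
  case (Suc s)
  have fin: "fin (Delta_pow D (Suc s) x)" unfolding DP_Suc using Suc by (intro fin_lin_ext) auto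
  have "supp (Delta_pow D (Suc s) x) \<subseteq> {w. length w = Suc (Suc s)}"
    unfolding DP_Suc
  proof (rule supp_lin_ext_len)
    fix w assume w: "w \<in> supp (Delta_pow D s x)"
    then have lw: "length w = Suc s" using Suc by auto
    then have "w \<noteq> []" by auto
    then have "supp (first_Delta D w) \<subseteq> (\<lambda>u. [] @ u @ tl w) ` supp (D (hd w))"
      using supp_ctx_lin[of "[]" "tl w" "D (hd w)"] by (simp add: fd_alt)
    also have "\<dots> \<subseteq> {w. length w = Suc (Suc s)}" using lw D_supp by auto
    finally show "supp (first_Delta D w) \<subseteq> {w. length w = Suc (Suc s)}" .
  qed
  then show ?case using fin by simp
qed

lemma DP_fin[simp,intro]: "fin (Delta_pow D s x)" using DP_fin_supp by blast
lemma DP_supp: "w \<in> supp (Delta_pow D s x) \<Longrightarrow> length w = Suc s" using DP_fin_supp by blast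

lemma DP_add: "Delta_pow D s (a + b) \<approx> Delta_pow D s a + Delta_pow D s b"
proof (induction s)
  case 0 then show ?case using MLin_add[of "[]" a b "[]"] by (simp only: Delta_pow.simps append.simps)
next
  case (Suc s)
  have "lin_ext (first_Delta D) (Delta_pow D s (a + b)) \<approx> lin_ext (first_Delta D) (Delta_pow D s a + Delta_pow D s b)"
    by (intro resp_teq[OF resp_fd] DP_fin fin_add Suc.IH)
  then show ?case by (simp only: DP_Suc lin_ext_add[OF DP_fin DP_fin])
qed

lemma DP_scale: "Delta_pow D s (scale c a) \<approx> fsmult c (Delta_pow D s a)"
proof (induction s)
  case 0 then show ?case using MLin_scale[of "[]" c a "[]"] by (simp only: Delta_pow.simps append.simps)
next
  case (Suc s)
  have "lin_ext (first_Delta D) (Delta_pow D s (scale c a)) \<approx> lin_ext (first_Delta D) (fsmult c (Delta_pow D s a))"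
    by (intro resp_teq[OF resp_fd] DP_fin fin_smult Suc.IH)
  then show ?case by (simp only: DP_Suc lin_ext_smult[OF DP_fin])
qed

definition Q :: "nat \<Rightarrow> 'h list \<Rightarrow> ('h list \<Rightarrow> 'k)" where
  "Q s w = (if length w = 2 then lin_ext (ctx [] [w!1]) (Delta_pow D s (w!0)) else 0)"

lemma Q2: "Q s [a, b] = lin_ext (ctx [] [b]) (Delta_pow D s a)" by (simp add: Q_def)
lemma fin_Q[simp,intro]: "fin (Q s w)" by (auto simp: Q_def)

lemma resp_Q: "resp (Q s)"
proof (rule resp2I)
  show "\<And>w. length w \<noteq> 2 \<Longrightarrow> Q s w = 0" by (simp add: Q_def)
  show "Q s [a + a', b] \<approx> Q s [a, b] + Q s [a', b]" for a a' b
  proof -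
    have "lin_ext (ctx [] [b]) (Delta_pow D s (a + a')) \<approx> lin_ext (ctx [] [b]) (Delta_pow D s a + Delta_pow D s a')"
      by (intro ctx_teq DP_add) auto
    then show ?thesis by (simp add: Q2 lin_ext_add)
  qed
  show "Q s [scale c a, b] \<approx> fsmult c (Q s [a, b])" for c a b
  proof -
    have "lin_ext (ctx [] [b]) (Delta_pow D s (scale c a)) \<approx> lin_ext (ctx [] [b]) (fsmult c (Delta_pow D s a))"
      by (intro ctx_teq DP_scale) auto
    then show ?thesis by (simp add: Q2 lin_ext_smult)
  qed
  show "Q s [a, b + b'] \<approx> Q s [a, b] + Q s [a, b']" for a b b'
    using ctx_suf_add[of "Delta_pow D s a" "[]" b b' "[]"] by (simp add: Q2)
  show "Q s [a, scale c b] \<approx> fsmult c (Q s [a, b])" for c a b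
    using ctx_suf_scale[of "Delta_pow D s a" "[]" c b "[]"] by (simp add: Q2)
qed

lemma fd_ctx_suffix:
  assumes "u \<noteq> []"
  shows "first_Delta D (u @ [q]) = lin_ext (ctx [] [q]) (first_Delta D u)"
proof -
  have "lin_ext (ctx [] [q]) (first_Delta D u) =
        lin_ext (\<lambda>v. lin_ext (ctx [] [q]) (ctx [] (tl u) v)) (D (hd u))"
    using assms by (simp add: fd_alt lin_ext_comp)
  also have "\<dots> = first_Delta D (u @ [q])"
    using assms by (simp add: fd_alt ctx_def[abs_def])
  finally show ?thesis by simp
qed

lemma DP_Q: "Delta_pow D (Suc s) x \<approx> lin_ext (Q s) (D x)"
proof (induction s)
  case 0
  have "lin_ext (Q 0) (D x) = lin_ext word (D x)"
  proof (rule lin_ext_cong)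
    fix w assume "w \<in> supp (D x)"
    then obtain p q where w: "w = [p, q]" using D_supp len2_obtain by blast
    show "Q 0 w = word w" by (simp add: w Q2 ctx_def)
  qed
  then show ?case by (simp add: lin_ext_word_id)
next
  case (Suc s)
  have "Delta_pow D (Suc (Suc s)) x = lin_ext (first_Delta D) (Delta_pow D (Suc s) x)" by simp
  also have "\<dots> \<approx> lin_ext (first_Delta D) (lin_ext (Q s) (D x))"
    using Suc by (intro resp_teq[OF resp_fd]) auto
  also have "\<dots> = lin_ext (\<lambda>w. lin_ext (first_Delta D) (Q s w)) (D x)"
    by (rule lin_ext_comp) auto
  also have "\<dots> = lin_ext (Q (Suc s)) (D x)"
  proof (rule lin_ext_cong)
    fix w assume "w \<in> supp (D x)"
    then obtain p q where w: "w = [p, q]" using D_supp len2_obtain by blast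
    have "lin_ext (first_Delta D) (Q s w) = lin_ext (\<lambda>u. first_Delta D (u @ [q])) (Delta_pow D s p)"
      by (simp add: w Q2 lin_ext_comp ctx_def)
    also have "\<dots> = lin_ext (\<lambda>u. lin_ext (ctx [] [q]) (first_Delta D u)) (Delta_pow D s p)"
    proof (rule lin_ext_cong)
      fix u assume "u \<in> supp (Delta_pow D s p)"
      then have "u \<noteq> []" using DP_supp by fastforce
      then show "first_Delta D (u @ [q]) = lin_ext (ctx [] [q]) (first_Delta D u)" by (rule fd_ctx_suffix)
    qed
    also have "\<dots> = lin_ext (ctx [] [q]) (Delta_pow D (Suc s) p)"
      by (simp add: DP_Suc lin_ext_comp)
    finally show "lin_ext (first_Delta D) (Q s w) = Q (Suc s) w" by (simp add: w Q2)
  qed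
  finally show ?case .
qed

end


locale cmoor = moor +
  assumes conn1: "\<And>x. D x \<approx> 0 \<Longrightarrow> x \<in> G 1"
begin

lemma sum_delta_fsmult:
  assumes "finite A" "a \<in> A" "\<forall>b'\<in>A. \<phi> b' = (if b' = a then 1 else 0)"
  shows "(\<Sum>a'\<in>A. fsmult (\<phi> a') (f a')) = f a"
proof -
  have "(\<Sum>a'\<in>A. fsmult (\<phi> a') (f a')) = (\<Sum>a'\<in>A. if a' = a then f a' else 0)"
    using assms(3) by (intro sum.cong) auto
  also have "\<dots> = f a" using assms(1,2) by simp
  finally show ?thesis .
qed

lemma decomp: "\<exists>B u. finite B \<and> independent B \<and> B \<subseteq> G 1 \<and> D x \<approx> (\<Sum>b\<in>B. word [u b, b])"
proof -
  let ?S = "supp (D x)"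
  have fS: "finite ?S" by simp
  have step1: "D x \<approx> (\<Sum>w\<in>?S. word [w!0, scale (D x w) (w!1)])"
  proof -
    have "D x = lin_ext word (D x)" by (simp add: lin_ext_word_id)
    also have "\<dots> = (\<Sum>w\<in>?S. fsmult (D x w) (word w))" by (rule lin_ext_eq) auto
    also have "\<dots> \<approx> (\<Sum>w\<in>?S. word [w!0, scale (D x w) (w!1)])"
    proof (rule teq_sum)
      fix w assume "w \<in> ?S"
      then obtain p q where w: "w = [p,q]" using D_supp len2_obtain by blast
      show "fsmult (D x w) (word w) \<approx> word [w!0, scale (D x w) (w!1)]" using w2s2 by (simp add: w)
    qed
    finally show ?thesis .
  qed
  obtain A where A: "A \<subseteq> (\<lambda>w. w!0) ` ?S" "independent A" "(\<lambda>w. w!0) ` ?S \<subseteq> span A"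
    using maximal_independent_subset by blast
  have fA: "finite A" using A(1) fS by (meson finite_imageI finite_subset)
  define q where "q a = (\<Sum>w\<in>?S. scale (representation A (w!0) a) (scale (D x w) (w!1)))" for a
  have step2: "D x \<approx> (\<Sum>a\<in>A. word [a, q a])"
  proof -
    have "(\<Sum>w\<in>?S. word [w!0, scale (D x w) (w!1)]) \<approx> (\<Sum>a\<in>A. word [a, q a])"
      unfolding q_def by (rule EXP1[OF fS fA A(2)]) (use A(3) in auto)
    with step1 show ?thesis by (rule teq_trans)
  qed
  have fsw: "fin (\<Sum>a\<in>A. word [a, q a])" using fA by auto
  have qG: "q a \<in> G 1" if a: "a \<in> A" for a
  proof -
    obtain \<phi> where \<phi>: "lfun \<phi>" "\<forall>b'\<in>A. \<phi> b' = (if b' = a then 1 else 0)"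
      using dual_exists[OF A(2) a] by blast
    let ?SD = "lin_ext (second_Delta D)"
    let ?Z = "(\<Sum>a'\<in>A. lin_ext (ctx [a'] []) (D (q a')))"
    have e1: "?SD (\<Sum>a\<in>A. word [a, q a]) = ?Z"
      using fA by (simp add: lin_ext_sum sd_alt)
    have "?SD (D x) \<approx> ?SD (\<Sum>a\<in>A. word [a, q a])" by (rule resp_teq[OF resp_sd D_fin fsw step2])
    then have e2: "?Z \<approx> ?SD (D x)" unfolding e1 by (rule teq_sym)
    have fZ: "fin ?Z" using fA by (intro fin_sum) auto
    have "lin_ext (ctf \<phi>) ?Z = (\<Sum>a'\<in>A. fsmult (\<phi> a') (D (q a')))"
      by (subst lin_ext_sum[OF fA]) (auto simp: ctf_ctx)
    also have "\<dots> = D (q a)" by (rule sum_delta_fsmult[OF fA a \<phi>(2)])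
    finally have e3: "lin_ext (ctf \<phi>) ?Z = D (q a)" .
    have "lin_ext (ctf \<phi>) ?Z \<approx> lin_ext (ctf \<phi>) (?SD (D x))"
      by (rule resp_teq[OF resp_ctf[OF \<phi>(1)] fZ _ e2]) auto
    also have "\<dots> \<approx> 0" by (rule resp_teq0[OF resp_ctf[OF \<phi>(1)] _ co0]) auto
    finally show ?thesis using e3 conn1 by simp
  qed
  obtain B where B: "B \<subseteq> q ` A" "independent B" "q ` A \<subseteq> span B"
    using maximal_independent_subset by blast
  have fB: "finite B" using B(1) fA by (meson finite_imageI finite_subset)
  define u where "u b = (\<Sum>a\<in>A. scale (representation B (q a) b) a)" for b
  have "(\<Sum>a\<in>A. word [a, q a]) \<approx> (\<Sum>b\<in>B. word [u b, b])"
    unfolding u_def by (rule EXP2[OF fA fB B(2)]) (use B(3) in auto)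
  with step2 have "D x \<approx> (\<Sum>b\<in>B. word [u b, b])" by (rule teq_trans)
  moreover have "B \<subseteq> G 1" using B(1) qG by auto
  ultimately show ?thesis using fB B(2) by blast
qed

end


context moor begin

definition mu :: "'h list \<Rightarrow> 'h" where
  "mu w = (if length w = 2 then prec (w!0) (w!1) else 0)"

lemma hresp_mu: "hresp mu"
  unfolding hresp_def
proof (intro conjI allI)
  fix u a b v
  show "mu (u @ (a + b) # v) = mu (u @ a # v) + mu (u @ b # v)"
  proof (cases "length (u @ a # v) = 2")
    case True then show ?thesis
      by (cases rule: len2_cases) (auto simp: mu_def prec_add1 prec_add2)
  next
    case False then show ?thesis by (simp add: mu_def)
  qed
next
  fix u c a v
  show "mu (u @ scale c a # v) = scale c (mu (u @ a # v))"
  proof (cases "length (u @ a # v) = 2")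
    case True then show ?thesis
      by (cases rule: len2_cases) (auto simp: mu_def prec_scale1 prec_scale2)
  next
    case False then show ?thesis by (simp add: mu_def)
  qed
qed

abbreviation mD :: "'h \<Rightarrow> 'h" where "mD x \<equiv> hsum mu (D x)"

lemma Q_add1: "Q s [x + y, d] \<approx> Q s [x, d] + Q s [y, d]"
  using resp_Q[of s] unfolding resp_def by (metis append.simps(1))
lemma Q_scale1: "Q s [scale c x, d] \<approx> fsmult c (Q s [x, d])"
  using resp_Q[of s] unfolding resp_def by (metis append.simps(1))
lemma Q_add2: "Q s [d, x + y] \<approx> Q s [d, x] + Q s [d, y]"
  using resp_Q[of s] unfolding resp_def by (metis append_Cons append_Nil)
lemma Q_scale2: "Q s [d, scale c x] \<approx> fsmult c (Q s [d, x])"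
  using resp_Q[of s] unfolding resp_def by (metis append_Cons append_Nil)

definition Psi :: "nat \<Rightarrow> 'h list \<Rightarrow> ('h list \<Rightarrow> 'k)" where
  "Psi s w = (if length w = 3 then Q s [prec (w!0) (w!1), w!2] else 0)"

lemma Psi3: "Psi s [a, b, d] = Q s [prec a b, d]" by (simp add: Psi_def)

lemma resp_Psi: "resp (Psi s)"
proof (rule resp3I)
  show "\<And>w. length w \<noteq> 3 \<Longrightarrow> Psi s w = 0" by (simp add: Psi_def)
  show "Psi s [a + a', b, d] \<approx> Psi s [a, b, d] + Psi s [a', b, d]" for a a' b d
    using Q_add1 by (simp add: Psi3 prec_add1)
  show "Psi s [scale c a, b, d] \<approx> fsmult c (Psi s [a, b, d])" for c a b d
    using Q_scale1 by (simp add: Psi3 prec_scale1)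
  show "Psi s [a, b + b', d] \<approx> Psi s [a, b, d] + Psi s [a, b', d]" for a b b' d
    using Q_add1 by (simp add: Psi3 prec_add2)
  show "Psi s [a, scale c b, d] \<approx> fsmult c (Psi s [a, b, d])" for c a b d
    using Q_scale1 by (simp add: Psi3 prec_scale2)
  show "Psi s [a, b, d + d'] \<approx> Psi s [a, b, d] + Psi s [a, b, d']" for a b d d'
    using Q_add2 by (simp add: Psi3)
  show "Psi s [a, b, scale c d] \<approx> fsmult c (Psi s [a, b, d])" for c a b d
    using Q_scale2 by (simp add: Psi3)
qed

lemma fin_Psi[simp,intro]: "fin (Psi s w)" by (auto simp: Psi_def)

lemma L2: "lin_ext (Psi s) (lin_ext (ctx [] [b]) (D v)) \<approx> Q s [mD v, b]"
proof -
  have "lin_ext (Psi s) (lin_ext (ctx [] [b]) (D v)) = lin_ext (\<lambda>w. Psi s (w @ [b])) (D v)"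
    by (subst lin_ext_comp) (auto simp: ctx_def)
  also have "\<dots> = lin_ext (\<lambda>w. Q s [mu w, b]) (D v)"
  proof (rule lin_ext_cong)
    fix w assume "w \<in> supp (D v)"
    then obtain p q where w: "w = [p, q]" using D_supp len2_obtain by blast
    show "Psi s (w @ [b]) = Q s [mu w, b]" by (simp add: w Psi3 mu_def)
  qed
  also have "\<dots> \<approx> Q s [mD v, b]"
    by (rule GL[where g="\<lambda>h. Q s [h, b]"]) (auto intro: Q_add1 Q_scale1)
  finally show ?thesis .
qed

lemma L3: "lin_ext (Psi s) (lin_ext flip23 (lin_ext (ctx [] [b]) (D v))) =
           lin_ext (Q s) (lin_ext (prec_first prec b) (D v))"
proof -
  have "lin_ext (Psi s) (lin_ext flip23 (lin_ext (ctx [] [b]) (D v))) =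
        lin_ext (Psi s) (lin_ext (\<lambda>w. flip23 (w @ [b])) (D v))"
    by (subst lin_ext_comp) (auto simp: ctx_def)
  also have "\<dots> = lin_ext (\<lambda>w. lin_ext (Psi s) (flip23 (w @ [b]))) (D v)"
    by (rule lin_ext_comp) auto
  also have "\<dots> = lin_ext (\<lambda>w. lin_ext (Q s) (prec_first prec b w)) (D v)"
  proof (rule lin_ext_cong)
    fix w assume "w \<in> supp (D v)"
    then obtain p q where w: "w = [p, q]" using D_supp len2_obtain by blast
    show "lin_ext (Psi s) (flip23 (w @ [b])) = lin_ext (Q s) (prec_first prec b w)"
      by (simp add: w Psi3 pf_alt)
  qed
  also have "\<dots> = lin_ext (Q s) (lin_ext (prec_first prec b) (D v))"
    by (rule lin_ext_comp[symmetric]) auto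
  finally show ?thesis .
qed

lemma L1:
  assumes B: "finite B" and dx: "D x \<approx> (\<Sum>b\<in>B. word [u b, b])"
  shows "lin_ext (first_Delta D) (D x) \<approx> (\<Sum>b\<in>B. lin_ext (ctx [] [b]) (D (u b)))"
proof -
  have "lin_ext (first_Delta D) (D x) \<approx> lin_ext (first_Delta D) (\<Sum>b\<in>B. word [u b, b])"
    by (rule resp_teq[OF resp_fd D_fin _ dx]) (use B in auto)
  also have "\<dots> = (\<Sum>b\<in>B. lin_ext (ctx [] [b]) (D (u b)))"
    using B by (simp add: lin_ext_sum fd_alt)
  finally show ?thesis .
qed

end


context cmoor begin

lemma main:
  assumes SG: "G 1 \<subseteq> S" and Ssub: "subspace S" and Scl: "\<And>x y. x \<in> S \<Longrightarrow> y \<in> S \<Longrightarrow> prec x y \<in> S"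
  shows "Delta_pow D (Suc n) x \<approx> 0 \<Longrightarrow> x \<in> S \<and> Delta_pow D n (mD x - scale (of_nat n) x) \<approx> 0"
proof (induction n arbitrary: x)
  case 0
  have Dx: "D x \<approx> 0" using 0 by (simp only: Delta_pow.simps)
  have xS: "x \<in> S" using conn1[OF Dx] SG by auto
  have "mD x = 0" using hsum_teq[OF hresp_mu D_fin fin_zero Dx] by simp
  then have e: "Delta_pow D 0 (mD x - scale (of_nat 0) x) = word [0]" by simp
  have z: "word [0] \<approx> 0" using MLin_zero[of "[]" "[]"] by (simp only: append.simps)
  show ?case
  proof (rule conjI)
    show "x \<in> S" by (rule xS)
    show "Delta_pow D 0 (mD x - scale (of_nat 0) x) \<approx> 0" unfolding e by (rule z)
  qed
next
  case (Suc n)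
  obtain B u where B: "finite B" "independent B" "B \<subseteq> G 1" and dx: "D x \<approx> (\<Sum>b\<in>B. word [u b, b])"
    using decomp by blast
  let ?W = "(\<Sum>b\<in>B. word [u b, b])"
  have fW: "fin ?W" using B by auto
  have ub0: "Delta_pow D (Suc n) (u b) \<approx> 0" if b: "b \<in> B" for b
  proof -
    obtain \<psi> where \<psi>: "lfun \<psi>" "\<forall>b'\<in>B. \<psi> b' = (if b' = b then 1 else 0)"
      using dual_exists[OF B(2) b] by blast
    let ?Z = "\<Sum>b\<in>B. lin_ext (ctx [] [b]) (Delta_pow D (Suc n) (u b))"
    have fZ: "fin ?Z" using B(1) by auto
    have "Delta_pow D (Suc (Suc n)) x \<approx> lin_ext (Q (Suc n)) (D x)" by (rule DP_Q)
    also have "\<dots> \<approx> lin_ext (Q (Suc n)) ?W" by (rule resp_teq[OF resp_Q D_fin fW dx])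
    also have "\<dots> = ?Z" using B(1) by (simp add: lin_ext_sum Q2)
    finally have "?Z \<approx> 0" using Suc.prems teq_sym teq_trans by blast
    then have "lin_ext (ctl \<psi>) ?Z \<approx> 0" by (rule resp_teq0[OF resp_ctl[OF \<psi>(1)] fZ])
    moreover have "lin_ext (ctl \<psi>) ?Z = Delta_pow D (Suc n) (u b)"
      by (subst lin_ext_sum[OF B(1)]) (auto simp: ctl_ctx intro!: sum_delta_fsmult[OF B(1) b \<psi>(2)])
    ultimately show ?thesis by simp
  qed
  have IHu: "u b \<in> S \<and> Delta_pow D n (mD (u b) - scale (of_nat n) (u b)) \<approx> 0" if "b \<in> B" for b
    using Suc.IH[OF ub0[OF that]] .
  have mDx: "mD x = (\<Sum>b\<in>B. prec (u b) b)"
  proof -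
    have "mD x = hsum mu ?W" by (rule hsum_teq[OF hresp_mu D_fin fW dx])
    also have "\<dots> = (\<Sum>b\<in>B. prec (u b) b)" using B(1) by (simp add: hsum_sum mu_def)
    finally show ?thesis .
  qed
  define y where "y = mD x - scale (of_nat (Suc n)) x"
  have ky: "Delta_pow D (Suc n) y \<approx> 0"
  proof -
    let ?PF = "\<lambda>b. lin_ext (prec_first prec b) (D (u b))"
    let ?Y = "(\<Sum>b\<in>B. word [u b, b] + ?PF b) - fsmult (of_nat (Suc n)) ?W"
    have fPF: "fin (?PF b)" for b by auto
    have fY: "fin ?Y" using B(1) fW fPF by (intro fin_diff fin_sum fin_add fin_smult) auto
    have Dy: "D y \<approx> ?Y"
    proof -
      have "D y \<approx> D (mD x) - D (scale (of_nat (Suc n)) x)" unfolding y_def by (rule Ddiff)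
      also have "\<dots> \<approx> (\<Sum>b\<in>B. D (prec (u b) b)) - fsmult (of_nat (Suc n)) ?W"
        unfolding mDx by (intro teq_diff Dsum[OF B(1)] teq_trans[OF Dscale teq_smult[OF dx]])
      also have "\<dots> \<approx> ?Y"
      proof (intro teq_diff teq_sum)
        fix b assume "b \<in> B"
        then have "proj1 G b = b" using B(3) proj1_G1 by auto
        then show "D (prec (u b) b) \<approx> word [u b, b] + ?PF b" using cp[of "u b" b] by simp
      qed simp
      finally show ?thesis .
    qed
    let ?Z = "\<Sum>b\<in>B. Q n [u b, b]"
    have key: "(\<Sum>b\<in>B. lin_ext (Q n) (?PF b)) \<approx> fsmult (of_nat n) ?Z"
    proof -
      let ?T = "lin_ext (first_Delta D) (D x)"
      let ?C = "(\<Sum>b\<in>B. lin_ext (ctx [] [b]) (D (u b)))"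
      have fC: "fin ?C" using B(1) by auto
      have fT: "fin ?T" by auto
      have TC: "?T \<approx> ?C" by (rule L1[OF B(1) dx])
      have "(\<Sum>b\<in>B. lin_ext (Q n) (?PF b)) =
            (\<Sum>b\<in>B. lin_ext (Psi n) (lin_ext flip23 (lin_ext (ctx [] [b]) (D (u b)))))"
        by (simp add: L3)
      also have "\<dots> = lin_ext (Psi n) (lin_ext flip23 ?C)"
      proof -
        have s1: "lin_ext flip23 ?C = (\<Sum>b\<in>B. lin_ext flip23 (lin_ext (ctx [] [b]) (D (u b))))"
          by (rule lin_ext_sum[OF B(1)]) auto
        have s2: "lin_ext (Psi n) (\<Sum>b\<in>B. lin_ext flip23 (lin_ext (ctx [] [b]) (D (u b)))) =
                  (\<Sum>b\<in>B. lin_ext (Psi n) (lin_ext flip23 (lin_ext (ctx [] [b]) (D (u b)))))"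
          by (rule lin_ext_sum[OF B(1)]) auto
        show ?thesis unfolding s1 s2 ..
      qed
      also have "\<dots> \<approx> lin_ext (Psi n) (lin_ext flip23 ?T)"
        by (intro resp_teq[OF resp_Psi] resp_teq[OF resp_flip] teq_sym[OF TC] fin_lin_ext fC fT fin_flip)
      also have "\<dots> \<approx> lin_ext (Psi n) ?T"
        by (intro resp_teq[OF resp_Psi] teq_sym[OF co] fin_lin_ext fT fin_flip)
      also have "\<dots> \<approx> lin_ext (Psi n) ?C"
        by (intro resp_teq[OF resp_Psi] TC fC fT)
      also have "\<dots> = (\<Sum>b\<in>B. lin_ext (Psi n) (lin_ext (ctx [] [b]) (D (u b))))"
        by (rule lin_ext_sum[OF B(1)]) auto
      also have "\<dots> \<approx> (\<Sum>b\<in>B. Q n [mD (u b), b])" by (intro teq_sum L2)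
      also have "\<dots> \<approx> (\<Sum>b\<in>B. fsmult (of_nat n) (Q n [u b, b]))"
      proof (rule teq_sum)
        fix b assume b: "b \<in> B"
        let ?w = "mD (u b) - scale (of_nat n) (u b)"
        have w0: "Q n [?w, b] \<approx> 0"
          unfolding Q2 by (rule resp_teq0[OF resp_ctx DP_fin]) (use IHu[OF b] in blast)
        have "Q n [mD (u b), b] = Q n [scale (of_nat n) (u b) + ?w, b]" by simp
        also have "\<dots> \<approx> Q n [scale (of_nat n) (u b), b] + Q n [?w, b]" by (rule Q_add1)
        also have "\<dots> \<approx> fsmult (of_nat n) (Q n [u b, b]) + 0" by (intro teq_add Q_scale1 w0)
        finally show "Q n [mD (u b), b] \<approx> fsmult (of_nat n) (Q n [u b, b])" by simp
      qed
      also have "\<dots> = fsmult (of_nat n) ?Z" by (simp add: T.scale_sum_right)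
      finally show ?thesis .
    qed
    have lY: "lin_ext (Q n) ?Y = ?Z + (\<Sum>b\<in>B. lin_ext (Q n) (?PF b)) - fsmult (of_nat (Suc n)) ?Z"
    proof -
      let ?SP = "\<Sum>b\<in>B. ?PF b"
      have fSP: "fin ?SP" using B(1) fPF by auto
      have h1: "(\<Sum>b\<in>B. word [u b, b] + ?PF b) = ?W + ?SP" by (rule sum.distrib)
      have h2: "lin_ext (Q n) ?W = ?Z" using B(1) by (simp add: lin_ext_sum Q2)
      have h3: "lin_ext (Q n) ?SP = (\<Sum>b\<in>B. lin_ext (Q n) (?PF b))"
        by (rule lin_ext_sum[OF B(1) fPF])
      have "lin_ext (Q n) ?Y = lin_ext (Q n) (?W + ?SP) - lin_ext (Q n) (fsmult (of_nat (Suc n)) ?W)"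
        unfolding h1 by (rule lin_ext_diff) (use fW fSP in auto)
      also have "\<dots> = lin_ext (Q n) ?W + lin_ext (Q n) ?SP - fsmult (of_nat (Suc n)) (lin_ext (Q n) ?W)"
        by (simp only: lin_ext_add[OF fW fSP] lin_ext_smult[OF fW])
      finally show ?thesis unfolding h2 h3 .
    qed
    have "Delta_pow D (Suc n) y \<approx> lin_ext (Q n) (D y)" by (rule DP_Q)
    also have "\<dots> \<approx> lin_ext (Q n) ?Y" by (rule resp_teq[OF resp_Q D_fin fY Dy])
    also have "\<dots> = ?Z + (\<Sum>b\<in>B. lin_ext (Q n) (?PF b)) - fsmult (of_nat (Suc n)) ?Z" by (rule lY)
    also have "\<dots> \<approx> ?Z + fsmult (of_nat n) ?Z - fsmult (of_nat (Suc n)) ?Z"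
      by (intro teq_diff teq_add key teq_refl)
    also have "\<dots> = 0" by (simp add: fsmult_add_left)
    finally show ?thesis .
  qed
  have yS: "y \<in> S" using Suc.IH[OF ky] by blast
  have mS: "mD x \<in> S" unfolding mDx using IHu SG B(3) by (intro subspace_sum[OF Ssub] Scl) auto
  have "mD x - y = scale (of_nat (Suc n)) x" by (simp add: y_def)
  then have "scale (inverse (of_nat (Suc n))) (mD x - y) = x"
    by (simp only: scale_scale left_inverse[OF of_nat_neq_0] scale_one)
  moreover have "scale (inverse (of_nat (Suc n))) (mD x - y) \<in> S"
    using Ssub mS yS by (intro subspace_scale subspace_diff)
  ultimately have xS: "x \<in> S" by simp
  show ?case
  proof (rule conjI)
    show "x \<in> S" by (rule xS)
    show "Delta_pow D (Suc n) (mD x - scale (of_nat (Suc n)) x) \<approx> 0" using ky unfolding y_def .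
  qed
qed

end


theorem lemma4p3:
  fixes scale :: "'k::field_char_0 \<Rightarrow> 'h::ab_group_add \<Rightarrow> 'h"
    and G :: "nat \<Rightarrow> 'h set"
    and prec :: "'h \<Rightarrow> 'h \<Rightarrow> 'h"
    and D :: "'h \<Rightarrow> ('h list \<Rightarrow> 'k)"
  assumes "moor_bialgebra scale G prec D"
    and "connected_moor scale G D"
  shows "moor_generated scale prec (primitives scale D) = UNIV \<and> primitives scale D = G 1"
proof -
  have M: "moor scale G prec D"
    using assms(1) unfolding moor_bialgebra_def moor_def moor_axioms_def tens_def by auto
  have C: "cmoor scale G prec D"
    using M assms(2) unfolding cmoor_def cmoor_axioms_def connected_moor_def primitives_def
    by auto
  interpret cmoor scale G prec D by (rule C)
  have P: "primitives scale D = G 1"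
  proof
    show "primitives scale D \<subseteq> G 1" using assms(2) unfolding connected_moor_def by auto
    show "G 1 \<subseteq> primitives scale D" using G1_prim unfolding primitives_def by auto
  qed
  have "x \<in> moor_generated scale prec (primitives scale D)" for x
    unfolding moor_generated_def
  proof (rule InterI, clarify)
    fix S assume S: "primitives scale D \<subseteq> S" "subspace S" "\<forall>x\<in>S. \<forall>y\<in>S. prec x y \<in> S"
    obtain r where r: "r \<ge> 1" "x \<in> ker_Delta_pow scale D r"
      using assms(2) unfolding connected_moor_def by blast
    then obtain n where n: "r = Suc n" by (cases r) auto
    have "Delta_pow D (Suc n) x \<approx> 0" using r n unfolding ker_Delta_pow_def by simp
    then show "x \<in> S" using main[of S n x] S P by auto
  qed
  then show ?thesis using P by auto
qed


end
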